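(* For all integers $k,n\ge 1$, \begin{align*} \zeta^*(k+1,\underbrace{1,\dots,1}_{n})&=(-1)^{k-1}\Big[\sum_{j=0}^{k-2}\zeta(n+1,\underbrace{1,\dots,1}_{j},2,\underbrace{1,\dots,1}_{k-2-j})+(n+1)\,\zeta(n+2,\underbrace{1,\dots,1}_{k-1})\Big]\\ &\quad+\sum_{r=0}^{k-2}(-1)^r\zeta(k-r)\,\zeta(n+1,\underbrace{1,\dots,1}_{r}), \end{align*} where an empty sum equals $0$.
   Context: For positive integers $k_1,\dots,k_n$ with $k_1\ge 2$, $\zeta(k_1,\dots,k_n)=\sum_{m_1>\dots>m_n\ge 1}\prod_i m_i^{-k_i}$ and $\zeta^*(k_1,\dots,k_n)=\sum_{m_1\ge\dots\ge m_n\ge 1}\prod_i m_i^{-k_i}$. $\underbrace{1,\dots,1}_{r}$ denotes $r$ entries equal to $1$ (none if $r=0$). *)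

theory Defs
  imports "HOL-Analysis.Analysis"
begin

text \<open>An index tuple (m_1,...,m_n) is a list of positive
naturals; for zeta it is strictly decreasing, for zeta-star weakly decreasing.
The value is the (unconditional, terms are nonnegative) sum over all such tuples.\<close>

definition mzv :: "nat list \<Rightarrow> real" where
  "mzv ks = infsum (\<lambda>ms. \<Prod>i<length ks. 1 / real (ms ! i) ^ (ks ! i))
     {ms. length ms = length ks \<and> sorted_wrt (>) ms \<and> (\<forall>m\<in>set ms. 1 \<le> m)}"

definition mzv_star :: "nat list \<Rightarrow> real" where
  "mzv_star ks = infsum (\<lambda>ms. \<Prod>i<length ks. 1 / real (ms ! i) ^ (ks ! i))
     {ms. length ms = length ks \<and> sorted_wrt (\<ge>) ms \<and> (\<forall>m\<in>set ms. 1 \<le> m)}"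

end

theory Submission
  imports Defs "HOL-Real_Asymp.Real_Asymp"
begin

definition Cc :: "nat \<Rightarrow> nat \<Rightarrow> real" where
  "Cc a b = fact a * fact b / fact (a + b)"

definition Kk :: "nat \<Rightarrow> nat \<Rightarrow> real" where
  "Kk a b = (\<Sum>j=1..b. 1 / real (a + j))"

definition Dd :: "nat \<Rightarrow> nat \<Rightarrow> real" where
  "Dd a b = Cc a b * Kk a b"

lemma Cc_pos: "Cc a b > 0"
  by (simp add: Cc_def)

lemma Cc_nonneg: "Cc a b \<ge> 0"
  using Cc_pos[of a b] by simp

lemma Cc_sym: "Cc a b = Cc b a"
  by (simp add: Cc_def add.commute mult.commute)

lemma Cc_0_right [simp]: "Cc a 0 = 1"
  by (simp add: Cc_def)

lemma Cc_0_left [simp]: "Cc 0 b = 1"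
  by (simp add: Cc_def)

lemma Cc_Suc_right: "Cc a (Suc b) * real (a + Suc b) = Cc a b * real (Suc b)"
proof -
  have f1: "fact (a + Suc b) = (fact (a + b) :: real) * real (a + Suc b)"
    by (simp add: algebra_simps)
  have f2: "fact (Suc b) = (fact b :: real) * real (Suc b)"
    by (simp add: algebra_simps)
  have pos: "(fact (a + b) :: real) > 0" "real (a + Suc b) > 0" by auto
  have "Cc a (Suc b) * real (a + Suc b) = fact a * (fact b * real (Suc b)) / (fact (a + b) * real (a + Suc b)) * real (a + Suc b)"
    unfolding Cc_def f1 f2 by simp
  also have "\<dots> = fact a * (fact b * real (Suc b)) / fact (a + b)"
    using pos by simp
  also have "\<dots> = Cc a b * real (Suc b)"
    by (simp add: Cc_def)
  finally show ?thesis .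
qed

lemma Cc_Suc_left: "Cc (Suc a) b * real (Suc a + b) = Cc a b * real (Suc a)"
  using Cc_Suc_right[of b a] by (simp add: Cc_sym add.commute)

lemma Kk_nonneg: "Kk a b \<ge> 0"
  by (simp add: Kk_def sum_nonneg)

lemma Kk_0_right [simp]: "Kk a 0 = 0"
  by (simp add: Kk_def)

lemma Kk_Suc_right: "Kk a (Suc b) = Kk a b + 1 / real (a + Suc b)"
  by (simp add: Kk_def)

lemma Kk_Suc_left: "Kk (Suc a) b = Kk a b + 1 / real (Suc a + b) - 1 / real (Suc a)"
proof (induction b)
  case 0
  then show ?case by simp
next
  case (Suc b)
  then show ?case by (simp add: Kk_Suc_right)
qed

lemma Kk_le: "Kk a b \<le> real b / real (Suc a)"
proof -
  have "Kk a b \<le> (\<Sum>j=1..b. 1 / real (Suc a))"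
    unfolding Kk_def by (intro sum_mono) (auto simp: frac_le)
  then show ?thesis by simp
qed

lemma Dd_nonneg: "Dd a b \<ge> 0"
  by (simp add: Dd_def Cc_nonneg Kk_nonneg)

lemma Dd_0_right [simp]: "Dd a 0 = 0"
  by (simp add: Dd_def)

lemma tele_enn:
  fixes w F :: "nat \<Rightarrow> real"
  assumes step: "\<And>j. w (Suc j) = F j - F (Suc j)" and nn: "\<And>j. 0 \<le> w j"
    and lim: "F \<longlonglongrightarrow> 0"
  shows "(\<Sum>j. ennreal (if i < j then w j else 0)) = ennreal (F i)"
proof -
  define g where "g = (\<lambda>j. if i < j then w j else 0)"
  have lim': "(\<lambda>n. F (n + i)) \<longlonglongrightarrow> 0"
    using LIMSEQ_ignore_initial_segment[OF lim, of i] .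
  have "(\<lambda>n. F (n + i) - F (Suc n + i)) sums (F (0 + i) - 0)"
    using telescope_sums'[OF lim'] by simp
  moreover have "\<And>n. g (n + Suc i) = F (n + i) - F (Suc n + i)"
    using step by (simp add: g_def)
  ultimately have "(\<lambda>n. g (n + Suc i)) sums (F i)" by simp
  then have "g sums (F i + (\<Sum>j<Suc i. g j))"
    by (rule iffD1[OF sums_iff_shift])
  moreover have "(\<Sum>j<Suc i. g j) = 0"
    by (simp add: g_def)
  ultimately have gs: "g sums F i" by simp
  have "(\<Sum>j. ennreal (g j)) = ennreal (\<Sum>j. g j)"
    by (rule suminf_ennreal2) (use nn gs in \<open>auto simp: g_def sums_summable\<close>)
  also have "(\<Sum>j. g j) = F i" using gs sums_unique by metis
  finally show ?thesis by (simp add: g_def)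
qed

lemma ennreal_suminf_swap:
  fixes f :: "nat \<Rightarrow> nat \<Rightarrow> ennreal"
  shows "(\<Sum>i. \<Sum>j. f i j) = (\<Sum>j. \<Sum>i. f i j)"
proof -
  have le: "(\<Sum>i. \<Sum>j. g i j) \<le> (\<Sum>j. \<Sum>i. g i j)" for g :: "nat \<Rightarrow> nat \<Rightarrow> ennreal"
  proof -
    have "(\<Sum>i. \<Sum>j. g i j) = (SUP n. \<Sum>i<n. \<Sum>j. g i j)"
      by (rule suminf_eq_SUP)
    also have "\<dots> \<le> (\<Sum>j. \<Sum>i. g i j)"
    proof (rule SUP_least)
      fix n
      have "(\<Sum>i<n. \<Sum>j. g i j) = (\<Sum>j. \<Sum>i<n. g i j)"
        by (rule suminf_sum[symmetric]) auto
      also have "\<dots> \<le> (\<Sum>j. \<Sum>i. g i j)"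
        by (intro suminf_le) (auto intro!: sum_le_suminf)
      finally show "(\<Sum>i<n. \<Sum>j. g i j) \<le> (\<Sum>j. \<Sum>i. g i j)" .
    qed
    finally show ?thesis .
  qed
  show ?thesis
    using le[of f] le[of "\<lambda>j i. f i j"] by (rule antisym)
qed

lemma abel_swap:
  fixes h :: "nat \<Rightarrow> nat \<Rightarrow> real"
  assumes nn: "\<And>i j. 0 \<le> h i j"
  shows "(\<Sum>j. ennreal (\<Sum>i<j. h i j)) = (\<Sum>i. \<Sum>j. ennreal (if i < j then h i j else 0))"
proof -
  have "ennreal (\<Sum>i<j. h i j) = (\<Sum>i. ennreal (if i < j then h i j else 0))" for j
  proof -
    have "ennreal (\<Sum>i<j. h i j) = (\<Sum>i<j. ennreal (h i j))"
      using nn by simp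
    also have "\<dots> = (\<Sum>i. ennreal (if i < j then h i j else 0))"
      by (subst suminf_finite[of "{..<j}"]) auto
    finally show ?thesis .
  qed
  then have "(\<Sum>j. ennreal (\<Sum>i<j. h i j)) = (\<Sum>j. \<Sum>i. ennreal (if i < j then h i j else 0))"
    by simp
  also have "\<dots> = (\<Sum>i. \<Sum>j. ennreal (if i < j then h i j else 0))"
    by (rule ennreal_suminf_swap)
  finally show ?thesis .
qed

lemma Cc_le_Cc1: "a \<ge> 1 \<Longrightarrow> Cc a j \<le> Cc 1 j"
proof (induction a rule: dec_induct)
  case base
  then show ?case by simp
next
  case (step a)
  have "Cc (Suc a) j = Cc a j * real (Suc a) / real (Suc a + j)"
    using Cc_Suc_left[of a j] by (simp add: field_simps)
  also have "\<dots> \<le> Cc a j"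
    using Cc_nonneg[of a j] by (simp add: divide_simps mult_left_mono)
  finally show ?case using step by simp
qed

lemma Cc1: "Cc 1 j = 1 / real (Suc j)"
  by (simp add: Cc_def)

lemma Cc_le: "a \<ge> 1 \<Longrightarrow> Cc a j \<le> 1 / real (Suc j)"
  using Cc_le_Cc1 Cc1 by metis

lemma Cc_le1: "Cc a b \<le> 1"
proof (cases "a = 0")
  case True then show ?thesis by simp
next
  case False
  then have "Cc a b \<le> 1 / real (Suc b)" by (intro Cc_le) auto
  also have "\<dots> \<le> 1" by simp
  finally show ?thesis .
qed

lemma inv_Suc_lim: "(\<lambda>j. 1 / real (Suc j)) \<longlonglongrightarrow> 0"
  using LIMSEQ_inverse_real_of_nat by (simp add: inverse_eq_divide)

lemma Cc_lim: "a \<ge> 1 \<Longrightarrow> (\<lambda>j. Cc a j) \<longlonglongrightarrow> 0"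
proof -
  assume a: "a \<ge> 1"
  have "norm (Cc a j) \<le> 1 / real (Suc j)" for j
    using Cc_le[OF a, of j] Cc_nonneg[of a j] by simp
  then show ?thesis
    by (intro Lim_null_comparison[OF _ inv_Suc_lim] always_eventually allI)
qed

lemma Cc_lim': "b \<ge> 1 \<Longrightarrow> (\<lambda>j. Cc j b) \<longlonglongrightarrow> 0"
  using Cc_lim[of b] by (simp add: Cc_sym)

lemma Kk_lim: "(\<lambda>j. Kk j c) \<longlonglongrightarrow> 0"
proof -
  have lim: "(\<lambda>j. real c * (1 / real (Suc j))) \<longlonglongrightarrow> 0"
    using tendsto_mult[OF tendsto_const inv_Suc_lim, of "real c"] by simp
  have "norm (Kk j c) \<le> real c * (1 / real (Suc j))" for j
    using Kk_le[of j c] Kk_nonneg[of j c] by simp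
  then show ?thesis
    by (intro Lim_null_comparison[OF _ lim] always_eventually allI)
qed

lemma Dd_lim': "b \<ge> 1 \<Longrightarrow> (\<lambda>j. Dd j b) \<longlonglongrightarrow> 0"
proof -
  have lim: "(\<lambda>j. real b * (1 / real (Suc j))) \<longlonglongrightarrow> 0"
    using tendsto_mult[OF tendsto_const inv_Suc_lim, of "real b"] by simp
  have "norm (Dd j b) \<le> real b * (1 / real (Suc j))" for j
  proof -
    have "Dd j b \<le> 1 * Kk j b"
      unfolding Dd_def by (intro mult_right_mono Cc_le1 Kk_nonneg)
    also have "\<dots> \<le> real b * (1 / real (Suc j))" using Kk_le[of j b] by simp
    finally show ?thesis using Dd_nonneg[of j b] by simp
  qed
  then show ?thesis
    by (intro Lim_null_comparison[OF _ lim] always_eventually allI)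
qed

lemma harm_0: "harm 0 = (0::real)"
  by (simp add: harm_def)

lemma harm_le_ln: "harm j \<le> 1 + ln (real j + 1)"
proof -
  have "harm (Suc j) - ln (real (Suc j)) \<le> harm (Suc 0) - ln (real (Suc 0))"
    using decseq_harm_diff_ln unfolding decseq_def by (metis le0)
  then have "harm (Suc j) \<le> 1 + ln (real j + 1)"
    by (simp add: harm_Suc add.commute harm_0)
  moreover have "harm j \<le> (harm (Suc j) :: real)" by (intro harm_mono) auto
  ultimately show ?thesis by simp
qed

lemma Kk_le_harm: "Kk a j \<le> harm j"
proof -
  have "Kk a j \<le> (\<Sum>i=1..j. inverse (real i))"
    unfolding Kk_def by (intro sum_mono) (auto simp: inverse_eq_divide frac_le)
  then show ?thesis by (simp add: harm_def)
qed

lemma Dd_lim: "a \<ge> 1 \<Longrightarrow> (\<lambda>j. Dd a j) \<longlonglongrightarrow> 0"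
proof -
  assume a: "a \<ge> 1"
  have lim: "(\<lambda>j. (1 + ln (real j + 1)) / real (Suc j)) \<longlonglongrightarrow> 0"
    by real_asymp
  have "norm (Dd a j) \<le> (1 + ln (real j + 1)) / real (Suc j)" for j
  proof -
    have "Dd a j \<le> (1 / real (Suc j)) * harm j"
      unfolding Dd_def using a
      by (intro mult_mono Cc_le Kk_le_harm) (auto simp: Kk_nonneg)
    also have "\<dots> \<le> (1 / real (Suc j)) * (1 + ln (real j + 1))"
      by (intro mult_left_mono harm_le_ln) auto
    finally show ?thesis using Dd_nonneg[of a j] by simp
  qed
  then show ?thesis
    by (intro Lim_null_comparison[OF _ lim] always_eventually allI)
qed

lemma R1: "Cc a j - Cc a (Suc j) = real a * Cc a (Suc j) / real (Suc j)"
proof -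
  have "Cc a j = Cc a (Suc j) * real (a + Suc j) / real (Suc j)"
    using Cc_Suc_right[of a j] by (simp add: field_simps)
  then show ?thesis by (simp add: field_simps)
qed

lemma R1': "Cc j b - Cc (Suc j) b = real b * Cc (Suc j) b / real (Suc j)"
  using R1[of b j] by (simp add: Cc_sym)

lemma R2: "Dd a j - Dd a (Suc j) = real a * Dd a (Suc j) / real (Suc j) - Cc a (Suc j) / real (Suc j)"
proof -
  define x where "x = Cc a (Suc j)"
  define y where "y = Kk a (Suc j)"
  define sj where "sj = real (Suc j)"
  define t where "t = real (a + Suc j)"
  have sj: "sj > 0" and t: "t > 0" and ts: "t = real a + sj"
    by (auto simp: sj_def t_def)
  have c: "Cc a j = x * t / sj"
    using Cc_Suc_right[of a j] sj by (simp add: field_simps x_def t_def sj_def)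
  have k: "Kk a j = y - 1 / t"
    using Kk_Suc_right[of a j] by (simp add: y_def t_def)
  have t0: "t \<noteq> 0" and s0: "sj \<noteq> 0" using sj t by auto
  have "x * t / sj * (y - 1 / t) - x * y = (x * t * y - x - x * y * sj) / sj"
    using t0 s0 by (simp add: field_simps)
  also have "\<dots> = (real a * (x * y) - x) / sj"
    by (simp add: ts algebra_simps)
  also have "\<dots> = real a * (x * y) / sj - x / sj"
    by (simp add: diff_divide_distrib)
  finally have "x * t / sj * (y - 1 / t) - x * y = real a * (x * y) / sj - x / sj" .
  then show ?thesis
    unfolding Dd_def c k x_def[symmetric] y_def[symmetric] sj_def[symmetric] .
qed

lemma R2': "Dd j b - Dd (Suc j) b = real b * Dd (Suc j) b / real (Suc j) + real b * Cc (Suc j) b / (real (Suc j))^2"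
proof -
  define x where "x = Cc (Suc j) b"
  define y where "y = Kk (Suc j) b"
  define sj where "sj = real (Suc j)"
  define t where "t = real (Suc j + b)"
  have sj: "sj > 0" and t: "t > 0" and ts: "t = real b + sj"
    by (auto simp: sj_def t_def)
  have c: "Cc j b = x * t / sj"
    using Cc_Suc_left[of j b] sj by (simp add: field_simps x_def t_def sj_def)
  have k: "Kk j b = y - 1 / t + 1 / sj"
    using Kk_Suc_left[of j b] by (simp add: y_def t_def sj_def)
  have t0: "t \<noteq> 0" and s0: "sj \<noteq> 0" using sj t by auto
  have "x * t / sj * (y - 1 / t + 1 / sj) - x * y = (x * t * y * sj - x * sj + x * t - x * y * sj * sj) / (sj * sj)"
    using t0 s0 by (simp add: field_simps)
  also have "\<dots> = (real b * x * y * sj + real b * x) / (sj * sj)"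
    by (simp add: ts algebra_simps)
  also have "\<dots> = real b * (x * y) / sj + real b * x / sj^2"
    using s0 by (simp add: field_simps power2_eq_square)
  finally have "x * t / sj * (y - 1 / t + 1 / sj) - x * y = real b * (x * y) / sj + real b * x / sj^2" .
  then show ?thesis
    unfolding Dd_def c k x_def[symmetric] y_def[symmetric] sj_def[symmetric] .
qed

lemma R3: "Kk j c - Kk (Suc j) c = real c / (real (Suc j) * real (Suc j + c))"
proof -
  define sj where "sj = real (Suc j)"
  define t where "t = real (Suc j + c)"
  have sj: "sj > 0" and t: "t > 0" and ts: "t = real c + sj"
    by (auto simp: sj_def t_def)
  have "Kk j c - Kk (Suc j) c = 1 / sj - 1 / t"
    using Kk_Suc_left[of j c] by (simp add: sj_def t_def)
  also have "\<dots> = (t - sj) / (sj * t)"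
    using sj t by (simp add: field_simps)
  also have "\<dots> = real c / (sj * t)"
    by (simp add: ts)
  finally show ?thesis by (simp add: sj_def t_def)
qed

lemma K1:
  assumes a: "a \<ge> 1" and c: "c \<ge> 0"
  shows "(\<Sum>j. ennreal (if i < j then c * (Cc a j / real j) else 0)) = ennreal (c * (Cc a i / real a))"
proof (rule tele_enn)
  show "c * (Cc a (Suc j) / real (Suc j)) = c * (Cc a j / real a) - c * (Cc a (Suc j) / real a)" for j
  proof -
    have "Cc a j - Cc a (Suc j) = real a * Cc a (Suc j) / real (Suc j)" by (rule R1)
    then have h: "Cc a (Suc j) / real (Suc j) = Cc a j / real a - Cc a (Suc j) / real a"
      using a by (simp add: field_simps)
    show ?thesis by (simp only: h right_diff_distrib)
  qed
  show "0 \<le> c * (Cc a j / real j)" for j using c Cc_nonneg by simp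
  have "(\<lambda>j. c * (Cc a j / real a)) \<longlonglongrightarrow> c * (0 / real a)"
    by (intro tendsto_mult tendsto_divide tendsto_const Cc_lim a) (use a in auto)
  then show "(\<lambda>j. c * (Cc a j / real a)) \<longlonglongrightarrow> 0" by simp
qed

lemma K1':
  assumes b: "b \<ge> 1" and c: "c \<ge> 0"
  shows "(\<Sum>j. ennreal (if i < j then c * (Cc j b / real j) else 0)) = ennreal (c * (Cc i b / real b))"
proof -
  have e: "Cc j b = Cc b j" for j by (rule Cc_sym)
  show ?thesis unfolding e using K1[OF b c, of i] .
qed

lemma K1M:
  assumes a: "a \<ge> 1" and p: "p \<ge> 0" and q: "q \<ge> 0"
  shows "(\<Sum>j. ennreal (if i < j then (p * Cc a j + q * Dd a j) / real j else 0))
       = ennreal (p * (Cc a i / real a) + q * (Dd a i / real a + Cc a i / (real a)^2))"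
proof (rule tele_enn)
  fix j
  have r1: "Cc a j - Cc a (Suc j) = real a * Cc a (Suc j) / real (Suc j)" by (rule R1)
  have r2: "Dd a j - Dd a (Suc j) = real a * Dd a (Suc j) / real (Suc j) - Cc a (Suc j) / real (Suc j)"
    by (rule R2)
  have a0: "real a > 0" using a by simp
  define x where "x = Cc a (Suc j)"
  define y where "y = Dd a (Suc j)"
  define s where "s = real (Suc j)"
  have s0: "s > 0" by (simp add: s_def)
  have cj: "Cc a j = real a * x / s + x" using r1 by (simp add: x_def s_def algebra_simps)
  have dj: "Dd a j = real a * y / s - x / s + y" using r2 by (simp add: x_def y_def s_def algebra_simps)
  show "(p * Cc a (Suc j) + q * Dd a (Suc j)) / real (Suc j) =
        p * (Cc a j / real a) + q * (Dd a j / real a + Cc a j / (real a)\<^sup>2) -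
        (p * (Cc a (Suc j) / real a) + q * (Dd a (Suc j) / real a + Cc a (Suc j) / (real a)\<^sup>2))"
    unfolding cj dj x_def[symmetric] y_def[symmetric] s_def[symmetric]
    using a0 s0 by (simp add: field_simps power2_eq_square)
next
  show "0 \<le> (p * Cc a j + q * Dd a j) / real j" for j
    using p q Cc_nonneg Dd_nonneg by simp
next
  have "(\<lambda>j. p * (Cc a j / real a) + q * (Dd a j / real a + Cc a j / (real a)\<^sup>2))
        \<longlonglongrightarrow> p * (0 / real a) + q * (0 / real a + 0 / (real a)\<^sup>2)"
    by (intro tendsto_intros Cc_lim Dd_lim a) (use a in auto)
  then show "(\<lambda>j. p * (Cc a j / real a) + q * (Dd a j / real a + Cc a j / (real a)\<^sup>2)) \<longlonglongrightarrow> 0"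
    by simp
qed

lemma K2M:
  assumes b: "b \<ge> 1" and p: "p \<ge> 0" and q: "q \<ge> 0"
  shows "(\<Sum>j. ennreal (if i < j then p * (Cc j b / real j) + q * (Cc j b / (real j)^2 + Dd j b / real j) else 0))
       = ennreal (p * (Cc i b / real b) + q * (Dd i b / real b))"
proof (rule tele_enn)
  fix j
  have r1: "Cc j b - Cc (Suc j) b = real b * Cc (Suc j) b / real (Suc j)" by (rule R1')
  have r2: "Dd j b - Dd (Suc j) b = real b * Dd (Suc j) b / real (Suc j) + real b * Cc (Suc j) b / (real (Suc j))^2"
    by (rule R2')
  have b0: "real b > 0" using b by simp
  define x where "x = Cc (Suc j) b"
  define y where "y = Dd (Suc j) b"
  define s where "s = real (Suc j)"
  have s0: "s > 0" by (simp add: s_def)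
  have cj: "Cc j b = real b * x / s + x" using r1 by (simp add: x_def s_def algebra_simps)
  have dj: "Dd j b = real b * y / s + real b * x / s^2 + y" using r2 by (simp add: x_def y_def s_def algebra_simps)
  show "p * (Cc (Suc j) b / real (Suc j)) + q * (Cc (Suc j) b / (real (Suc j))\<^sup>2 + Dd (Suc j) b / real (Suc j)) =
        p * (Cc j b / real b) + q * (Dd j b / real b) -
        (p * (Cc (Suc j) b / real b) + q * (Dd (Suc j) b / real b))"
    unfolding cj dj x_def[symmetric] y_def[symmetric] s_def[symmetric]
    using b0 s0 by (simp add: field_simps power2_eq_square)
next
  show "0 \<le> p * (Cc j b / real j) + q * (Cc j b / (real j)\<^sup>2 + Dd j b / real j)" for j
    using p q Cc_nonneg Dd_nonneg by simp
next
  have "(\<lambda>j. p * (Cc j b / real b) + q * (Dd j b / real b))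
        \<longlonglongrightarrow> p * (0 / real b) + q * (0 / real b)"
    by (intro tendsto_intros Cc_lim' Dd_lim' b) (use b in auto)
  then show "(\<lambda>j. p * (Cc j b / real b) + q * (Dd j b / real b)) \<longlonglongrightarrow> 0"
    by simp
qed

lemma KT:
  assumes c: "c \<ge> 1" and p: "p \<ge> 0"
  shows "(\<Sum>j. ennreal (if i < j then p * (real c / (real j * real (j + c))) else 0)) = ennreal (p * Kk i c)"
proof (rule tele_enn)
  show "p * (real c / (real (Suc j) * real (Suc j + c))) = p * Kk j c - p * Kk (Suc j) c" for j
    using R3[of j c] by (simp add: right_diff_distrib[symmetric])
  show "0 \<le> p * (real c / (real j * real (j + c)))" for j using p by simp
  have "(\<lambda>j. p * Kk j c) \<longlonglongrightarrow> p * 0"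
    by (intro tendsto_intros Kk_lim)
  then show "(\<lambda>j. p * Kk j c) \<longlonglongrightarrow> 0" by simp
qed

definition Bop :: "(nat \<Rightarrow> real) \<Rightarrow> nat \<Rightarrow> real" where
  "Bop g b = (\<Sum>i<b. g i) / real b"

definition BopM :: "(nat \<Rightarrow> real) \<Rightarrow> (nat \<Rightarrow> real) \<Rightarrow> nat \<Rightarrow> real" where
  "BopM f fm a = (\<Sum>i<a. fm i + f i / real a) / real a"

definition Z :: "(nat \<Rightarrow> real) \<Rightarrow> (nat \<Rightarrow> real) \<Rightarrow> ennreal" where
  "Z f g = (\<Sum>a. \<Sum>b. ennreal (f a * Cc a b * g b))"

definition ZM :: "(nat \<Rightarrow> real) \<Rightarrow> (nat \<Rightarrow> real) \<Rightarrow> (nat \<Rightarrow> real) \<Rightarrow> ennreal" where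
  "ZM f fm g = (\<Sum>a. \<Sum>b. ennreal ((fm a * Cc a b + f a * Dd a b) * g b))"

lemma Bop_nonneg: "(\<And>i. g i \<ge> 0) \<Longrightarrow> Bop g b \<ge> 0"
  unfolding Bop_def by (intro divide_nonneg_nonneg sum_nonneg) auto

lemma BopM_nonneg: "(\<And>i. f i \<ge> 0) \<Longrightarrow> (\<And>i. fm i \<ge> 0) \<Longrightarrow> BopM f fm b \<ge> 0"
  unfolding BopM_def by (intro divide_nonneg_nonneg sum_nonneg add_nonneg_nonneg) auto

lemma T1:
  assumes f: "\<And>a. f a \<ge> 0" and g: "\<And>b. g b \<ge> 0" and f0: "f 0 = 0"
  shows "Z f (Bop g) = Z (\<lambda>a. f a / real a) g"
proof -
  have "(\<Sum>b. ennreal (f a * Cc a b * Bop g b)) = (\<Sum>b. ennreal (f a / real a * Cc a b * g b))" for a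
  proof (cases "a = 0")
    case True then show ?thesis using f0 by simp
  next
    case False
    then have a: "a \<ge> 1" by simp
    have e1: "f a * Cc a b * Bop g b = (\<Sum>i<b. g i * f a * (Cc a b / real b))" for b
    proof -
      have "(\<Sum>i<b. g i * f a * (Cc a b / real b)) = (\<Sum>i<b. g i) * (f a * (Cc a b / real b))"
        by (simp add: sum_distrib_right sum_divide_distrib mult.assoc)
      then show ?thesis by (simp add: Bop_def)
    qed
    have "(\<Sum>b. ennreal (f a * Cc a b * Bop g b)) = (\<Sum>b. ennreal (\<Sum>i<b. g i * f a * (Cc a b / real b)))"
      by (simp only: e1)
    also have "\<dots> = (\<Sum>i. \<Sum>b. ennreal (if i < b then g i * f a * (Cc a b / real b) else 0))"
      by (rule abel_swap) (simp add: f g Cc_nonneg)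
    also have "\<dots> = (\<Sum>i. ennreal (g i * f a * (Cc a i / real a)))"
      by (simp add: K1[OF a] f g)
    also have "\<dots> = (\<Sum>b. ennreal (f a / real a * Cc a b * g b))"
      by (simp add: mult.commute mult.left_commute)
    finally show ?thesis .
  qed
  then show ?thesis unfolding Z_def by simp
qed

lemma Z_swap: "Z f g = (\<Sum>b. \<Sum>a. ennreal (f a * Cc a b * g b))"
  unfolding Z_def by (rule ennreal_suminf_swap)

lemma T2:
  assumes f: "\<And>a. f a \<ge> 0" and g: "\<And>b. g b \<ge> 0" and g0: "g 0 = 0"
  shows "Z (Bop f) g = Z f (\<lambda>b. g b / real b)"
proof -
  have "(\<Sum>a. ennreal (Bop f a * Cc a b * g b)) = (\<Sum>a. ennreal (f a * Cc a b * (g b / real b)))" for b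
  proof (cases "b = 0")
    case True then show ?thesis using g0 by simp
  next
    case False
    then have b: "b \<ge> 1" by simp
    have e1: "Bop f a * Cc a b * g b = (\<Sum>i<a. f i * g b * (Cc a b / real a))" for a
    proof -
      have "(\<Sum>i<a. f i * g b * (Cc a b / real a)) = (\<Sum>i<a. f i) * (g b * (Cc a b / real a))"
        by (simp add: sum_distrib_right sum_divide_distrib mult.assoc)
      then show ?thesis by (simp add: Bop_def)
    qed
    have "(\<Sum>a. ennreal (Bop f a * Cc a b * g b)) = (\<Sum>a. ennreal (\<Sum>i<a. f i * g b * (Cc a b / real a)))"
      by (simp only: e1)
    also have "\<dots> = (\<Sum>i. \<Sum>a. ennreal (if i < a then f i * g b * (Cc a b / real a) else 0))"
      by (rule abel_swap) (simp add: f g Cc_nonneg)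
    also have "\<dots> = (\<Sum>i. ennreal (f i * g b * (Cc i b / real b)))"
      by (simp add: K1'[OF b] f g)
    also have "\<dots> = (\<Sum>a. ennreal (f a * Cc a b * (g b / real b)))"
      by (simp add: mult.commute mult.left_commute)
    finally show ?thesis .
  qed
  then show ?thesis unfolding Z_swap by simp
qed

lemma T1M:
  assumes f: "\<And>a. f a \<ge> 0" and fm: "\<And>a. fm a \<ge> 0" and g: "\<And>b. g b \<ge> 0"
    and f0: "f 0 = 0" and fm0: "fm 0 = 0"
  shows "ZM f fm (Bop g) = ZM (\<lambda>a. f a / real a) (\<lambda>a. fm a / real a + f a / (real a)^2) g"
proof -
  have "(\<Sum>b. ennreal ((fm a * Cc a b + f a * Dd a b) * Bop g b))
      = (\<Sum>b. ennreal (((fm a / real a + f a / (real a)^2) * Cc a b + f a / real a * Dd a b) * g b))" for a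
  proof (cases "a = 0")
    case True then show ?thesis using f0 fm0 by simp
  next
    case False
    then have a: "a \<ge> 1" by simp
    have e1: "(fm a * Cc a b + f a * Dd a b) * Bop g b
        = (\<Sum>i<b. ((g i * fm a) * Cc a b + (g i * f a) * Dd a b) / real b)" for b
    proof -
      have "(\<Sum>i<b. ((g i * fm a) * Cc a b + (g i * f a) * Dd a b) / real b)
          = (\<Sum>i<b. g i * ((fm a * Cc a b + f a * Dd a b) / real b))"
        by (rule sum.cong) (simp_all add: distrib_left mult.assoc)
      also have "\<dots> = (\<Sum>i<b. g i) * ((fm a * Cc a b + f a * Dd a b) / real b)"
        by (rule sum_distrib_right[symmetric])
      finally have "(\<Sum>i<b. ((g i * fm a) * Cc a b + (g i * f a) * Dd a b) / real b)
          = (\<Sum>i<b. g i) * ((fm a * Cc a b + f a * Dd a b) / real b)" .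
      then show ?thesis by (simp add: Bop_def)
    qed
    have "(\<Sum>b. ennreal ((fm a * Cc a b + f a * Dd a b) * Bop g b))
        = (\<Sum>b. ennreal (\<Sum>i<b. ((g i * fm a) * Cc a b + (g i * f a) * Dd a b) / real b))"
      by (simp only: e1)
    also have "\<dots> = (\<Sum>i. \<Sum>b. ennreal (if i < b then ((g i * fm a) * Cc a b + (g i * f a) * Dd a b) / real b else 0))"
      by (rule abel_swap) (simp add: f fm g Cc_nonneg Dd_nonneg)
    also have "\<dots> = (\<Sum>i. ennreal ((g i * fm a) * (Cc a i / real a) + (g i * f a) * (Dd a i / real a + Cc a i / (real a)^2)))"
      by (simp add: K1M[OF a] f fm g)
    also have "\<dots> = (\<Sum>b. ennreal (((fm a / real a + f a / (real a)^2) * Cc a b + f a / real a * Dd a b) * g b))"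
      by (simp add: algebra_simps)
    finally show ?thesis .
  qed
  then show ?thesis unfolding ZM_def by simp
qed

lemma ZM_swap: "ZM f fm g = (\<Sum>b. \<Sum>a. ennreal ((fm a * Cc a b + f a * Dd a b) * g b))"
  unfolding ZM_def by (rule ennreal_suminf_swap)

lemma T2M:
  assumes f: "\<And>a. f a \<ge> 0" and fm: "\<And>a. fm a \<ge> 0" and g: "\<And>b. g b \<ge> 0" and g0: "g 0 = 0"
  shows "ZM (Bop f) (BopM f fm) g = ZM f fm (\<lambda>b. g b / real b)"
proof -
  have "(\<Sum>a. ennreal ((BopM f fm a * Cc a b + Bop f a * Dd a b) * g b))
      = (\<Sum>a. ennreal ((fm a * Cc a b + f a * Dd a b) * (g b / real b)))" for b
  proof (cases "b = 0")
    case True then show ?thesis using g0 by simp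
  next
    case False
    then have b: "b \<ge> 1" by simp
    have e1: "(BopM f fm a * Cc a b + Bop f a * Dd a b) * g b
        = (\<Sum>i<a. (fm i * g b) * (Cc a b / real a) + (f i * g b) * (Cc a b / (real a)^2 + Dd a b / real a))" for a
    proof (cases "a = 0")
      case True then show ?thesis by (simp add: Bop_def BopM_def)
    next
      case False
      have s1: "(\<Sum>i<a. (fm i * g b) * (Cc a b / real a) + (f i * g b) * (Cc a b / (real a)^2 + Dd a b / real a))
          = (\<Sum>i<a. fm i) * (g b * (Cc a b / real a)) + (\<Sum>i<a. f i) * (g b * (Cc a b / (real a)^2 + Dd a b / real a))"
        by (simp add: sum.distrib sum_distrib_right sum_divide_distrib mult.assoc)
      have s2: "(\<Sum>i<a. fm i + f i / real a) = (\<Sum>i<a. fm i) + (\<Sum>i<a. f i) / real a"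
        by (simp add: sum.distrib sum_divide_distrib)
      show ?thesis unfolding s1 BopM_def Bop_def s2
        using False by (simp add: field_simps power2_eq_square)
    qed
    have "(\<Sum>a. ennreal ((BopM f fm a * Cc a b + Bop f a * Dd a b) * g b))
        = (\<Sum>a. ennreal (\<Sum>i<a. (fm i * g b) * (Cc a b / real a) + (f i * g b) * (Cc a b / (real a)^2 + Dd a b / real a)))"
      by (simp only: e1)
    also have "\<dots> = (\<Sum>i. \<Sum>a. ennreal (if i < a then (fm i * g b) * (Cc a b / real a) + (f i * g b) * (Cc a b / (real a)^2 + Dd a b / real a) else 0))"
      by (rule abel_swap) (simp add: f fm g Cc_nonneg Dd_nonneg)
    also have "\<dots> = (\<Sum>i. ennreal ((fm i * g b) * (Cc i b / real b) + (f i * g b) * (Dd i b / real b)))"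
      by (simp add: K2M[OF b] f fm g)
    also have "\<dots> = (\<Sum>a. ennreal ((fm a * Cc a b + f a * Dd a b) * (g b / real b)))"
      by (simp add: algebra_simps)
    finally show ?thesis .
  qed
  then show ?thesis unfolding ZM_swap by simp
qed

primrec beta :: "nat \<Rightarrow> nat \<Rightarrow> real" where
  "beta 0 = (\<lambda>b. if b = 0 then 1 else 0)"
| "beta (Suc u) = Bop (beta u)"

primrec betaM :: "nat \<Rightarrow> nat \<Rightarrow> real" where
  "betaM 0 = (\<lambda>b. 0)"
| "betaM (Suc u) = BopM (beta u) (betaM u)"

primrec hstar :: "nat \<Rightarrow> nat \<Rightarrow> real" where
  "hstar 0 c = 1"
| "hstar (Suc u) c = (\<Sum>d=1..c. hstar u d / real d)"

lemma beta_nonneg: "beta u b \<ge> 0"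
  by (induction u arbitrary: b) (auto intro!: Bop_nonneg)

lemma betaM_nonneg: "betaM u b \<ge> 0"
  by (induction u arbitrary: b) (auto intro!: BopM_nonneg beta_nonneg)

lemma hstar_nonneg: "hstar u c \<ge> 0"
  by (induction u arbitrary: c) (auto intro!: sum_nonneg divide_nonneg_nonneg)

lemma beta_at0: "u \<ge> 1 \<Longrightarrow> beta u 0 = 0"
  by (cases u) (auto simp: Bop_def)

lemma betaM_at0: "betaM u 0 = 0"
  by (cases u) (auto simp: BopM_def)

lemma Z_beta0_right: "Z f (beta 0) = (\<Sum>a. ennreal (f a))"
proof -
  have "(\<Sum>b. ennreal (f a * Cc a b * beta 0 b)) = ennreal (f a)" for a
    by (subst suminf_finite[of "{0}"]) auto
  then show ?thesis unfolding Z_def by simp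
qed

lemma Z_beta0_left: "Z (beta 0) g = (\<Sum>b. ennreal (g b))"
proof -
  have "(\<Sum>a. \<Sum>b. ennreal (beta 0 a * Cc a b * g b)) = (\<Sum>b. ennreal (beta 0 0 * Cc 0 b * g b))"
    by (subst suminf_finite[of "{0}"]) auto
  then show ?thesis unfolding Z_def by simp
qed

lemma ZM_beta0_right: "ZM f fm (beta 0) = (\<Sum>a. ennreal (fm a))"
proof -
  have "(\<Sum>b. ennreal ((fm a * Cc a b + f a * Dd a b) * beta 0 b)) = ennreal (fm a)" for a
    by (subst suminf_finite[of "{0}"]) auto
  then show ?thesis unfolding ZM_def by simp
qed

lemma ZM_beta0_left: "ZM (beta 0) (betaM 0) g = (\<Sum>b. ennreal (Kk 0 b * g b))"
proof -
  have "(\<Sum>a. \<Sum>b. ennreal ((betaM 0 a * Cc a b + beta 0 a * Dd a b) * g b))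
      = (\<Sum>b. ennreal ((betaM 0 0 * Cc 0 b + beta 0 0 * Dd 0 b) * g b))"
    by (subst suminf_finite[of "{0}"]) auto
  then show ?thesis unfolding ZM_def by (simp add: Dd_def)
qed

lemma IT1:
  assumes f: "\<And>a. f a \<ge> 0" and f0: "f 0 = 0"
  shows "Z (\<lambda>a. f a / real a ^ j) (beta u) = Z (\<lambda>a. f a / real a ^ (j + u)) (beta 0)"
proof (induction u arbitrary: j)
  case 0
  then show ?case by simp
next
  case (Suc u)
  have "Z (\<lambda>a. f a / real a ^ j) (beta (Suc u)) = Z (\<lambda>a. f a / real a ^ j) (Bop (beta u))"
    by simp
  also have "\<dots> = Z (\<lambda>a. f a / real a ^ j / real a) (beta u)"
    by (rule T1) (auto simp: f f0 beta_nonneg)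
  also have "(\<lambda>a. f a / real a ^ j / real a) = (\<lambda>a. f a / real a ^ Suc j)"
    by (simp add: power_Suc2 mult.commute)
  also have "Z (\<lambda>a. f a / real a ^ Suc j) (beta u) = Z (\<lambda>a. f a / real a ^ (Suc j + u)) (beta 0)"
    by (rule Suc.IH)
  finally show ?case by simp
qed

lemma IT2:
  assumes g: "\<And>b. g b \<ge> 0" and g0: "g 0 = 0"
  shows "Z (beta v) (\<lambda>b. g b / real b ^ j) = Z (beta 0) (\<lambda>b. g b / real b ^ (j + v))"
proof (induction v arbitrary: j)
  case 0
  then show ?case by simp
next
  case (Suc v)
  have "Z (beta (Suc v)) (\<lambda>b. g b / real b ^ j) = Z (Bop (beta v)) (\<lambda>b. g b / real b ^ j)"
    by simp
  also have "\<dots> = Z (beta v) (\<lambda>b. g b / real b ^ j / real b)"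
    by (rule T2) (auto simp: g g0 beta_nonneg)
  also have "(\<lambda>b. g b / real b ^ j / real b) = (\<lambda>b. g b / real b ^ Suc j)"
    by (simp add: power_Suc2 mult.commute)
  also have "Z (beta v) (\<lambda>b. g b / real b ^ Suc j) = Z (beta 0) (\<lambda>b. g b / real b ^ (Suc j + v))"
    by (rule Suc.IH)
  finally show ?case by simp
qed

lemma IT1M:
  assumes f: "\<And>a. f a \<ge> 0" and fm: "\<And>a. fm a \<ge> 0" and f0: "f 0 = 0" and fm0: "fm 0 = 0"
  shows "ZM (\<lambda>a. f a / real a ^ j) (\<lambda>a. fm a / real a ^ j + real j * f a / real a ^ (j + 1)) (beta u)
       = ZM (\<lambda>a. f a / real a ^ (j + u)) (\<lambda>a. fm a / real a ^ (j + u) + real (j + u) * f a / real a ^ (j + u + 1)) (beta 0)"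
proof (induction u arbitrary: j)
  case 0
  then show ?case by simp
next
  case (Suc u)
  have "ZM (\<lambda>a. f a / real a ^ j) (\<lambda>a. fm a / real a ^ j + real j * f a / real a ^ (j + 1)) (beta (Suc u))
      = ZM (\<lambda>a. f a / real a ^ j) (\<lambda>a. fm a / real a ^ j + real j * f a / real a ^ (j + 1)) (Bop (beta u))"
    by simp
  also have "\<dots> = ZM (\<lambda>a. f a / real a ^ j / real a)
      (\<lambda>a. (fm a / real a ^ j + real j * f a / real a ^ (j + 1)) / real a + f a / real a ^ j / (real a)^2) (beta u)"
    by (rule T1M) (auto simp: f fm f0 fm0 beta_nonneg)
  also have "(\<lambda>a. f a / real a ^ j / real a) = (\<lambda>a. f a / real a ^ Suc j)"
    by (simp add: power_Suc2 mult.commute)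
  also have "(\<lambda>a. (fm a / real a ^ j + real j * f a / real a ^ (j + 1)) / real a + f a / real a ^ j / (real a)^2)
      = (\<lambda>a. fm a / real a ^ Suc j + real (Suc j) * f a / real a ^ (Suc j + 1))"
  proof
    fix a
    show "(fm a / real a ^ j + real j * f a / real a ^ (j + 1)) / real a + f a / real a ^ j / (real a)^2
        = fm a / real a ^ Suc j + real (Suc j) * f a / real a ^ (Suc j + 1)"
    proof (cases "a = 0")
      case True then show ?thesis by (simp add: f0 fm0)
    next
      case False
      then show ?thesis by (simp add: field_simps power2_eq_square)
    qed
  qed
  also have "ZM (\<lambda>a. f a / real a ^ Suc j) (\<lambda>a. fm a / real a ^ Suc j + real (Suc j) * f a / real a ^ (Suc j + 1)) (beta u)
      = ZM (\<lambda>a. f a / real a ^ (Suc j + u)) (\<lambda>a. fm a / real a ^ (Suc j + u) + real (Suc j + u) * f a / real a ^ (Suc j + u + 1)) (beta 0)"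
    by (rule Suc.IH)
  finally show ?case by simp
qed

lemma IT2M:
  assumes g: "\<And>b. g b \<ge> 0" and g0: "g 0 = 0"
  shows "ZM (beta v) (betaM v) (\<lambda>b. g b / real b ^ j) = ZM (beta 0) (betaM 0) (\<lambda>b. g b / real b ^ (j + v))"
proof (induction v arbitrary: j)
  case 0
  then show ?case by simp
next
  case (Suc v)
  have "ZM (beta (Suc v)) (betaM (Suc v)) (\<lambda>b. g b / real b ^ j)
      = ZM (Bop (beta v)) (BopM (beta v) (betaM v)) (\<lambda>b. g b / real b ^ j)"
    by simp
  also have "\<dots> = ZM (beta v) (betaM v) (\<lambda>b. g b / real b ^ j / real b)"
    by (rule T2M) (auto simp: g g0 beta_nonneg betaM_nonneg)
  also have "(\<lambda>b. g b / real b ^ j / real b) = (\<lambda>b. g b / real b ^ Suc j)"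
    by (simp add: power_Suc2 mult.commute)
  also have "ZM (beta v) (betaM v) (\<lambda>b. g b / real b ^ Suc j) = ZM (beta 0) (betaM 0) (\<lambda>b. g b / real b ^ (Suc j + v))"
    by (rule Suc.IH)
  finally show ?case by simp
qed

theorem D1:
  assumes n: "n \<ge> 1"
  shows "(\<Sum>a. ennreal (beta (Suc r) a / real a ^ n)) = (\<Sum>b. ennreal (beta n b / real b ^ Suc r))"
proof -
  have bn: "\<And>a. beta (Suc r) a \<ge> 0" by (rule beta_nonneg)
  have b0: "beta (Suc r) 0 = 0" by (rule beta_at0) simp
  have "Z (beta (Suc r)) (beta n) = Z (\<lambda>a. beta (Suc r) a / real a ^ 0) (beta n)" by simp
  also have "\<dots> = Z (\<lambda>a. beta (Suc r) a / real a ^ (0 + n)) (beta 0)"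
    by (rule IT1[where f="beta (Suc r)", OF bn b0])
  finally have 1: "Z (beta (Suc r)) (beta n) = (\<Sum>a. ennreal (beta (Suc r) a / real a ^ n))"
    unfolding Z_beta0_right by simp
  have "Z (beta (Suc r)) (beta n) = Z (beta (Suc r)) (\<lambda>b. beta n b / real b ^ 0)" by simp
  also have "\<dots> = Z (beta 0) (\<lambda>b. beta n b / real b ^ (0 + Suc r))"
    by (rule IT2[where g="beta n", OF beta_nonneg beta_at0[OF n]])
  finally have 2: "Z (beta (Suc r)) (beta n) = (\<Sum>b. ennreal (beta n b / real b ^ Suc r))"
    unfolding Z_beta0_left by simp
  show ?thesis using 1 2 by simp
qed

theorem D2:
  assumes n: "n \<ge> 1" and k: "k \<ge> 1"
  shows "(\<Sum>a. ennreal (betaM k a / real a ^ n + real n * beta k a / real a ^ (n + 1)))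
       = (\<Sum>b. ennreal (Kk 0 b * (beta n b / real b ^ k)))"
proof -
  have bn: "\<And>a. beta k a \<ge> 0" by (rule beta_nonneg)
  have bmn: "\<And>a. betaM k a \<ge> 0" by (rule betaM_nonneg)
  have b0: "beta k 0 = 0" by (rule beta_at0[OF k])
  have bm0: "betaM k 0 = 0" by (rule betaM_at0)
  have "ZM (beta k) (betaM k) (beta n)
      = ZM (\<lambda>a. beta k a / real a ^ 0) (\<lambda>a. betaM k a / real a ^ 0 + real 0 * beta k a / real a ^ (0 + 1)) (beta n)"
    by simp
  also have "\<dots> = ZM (\<lambda>a. beta k a / real a ^ (0 + n)) (\<lambda>a. betaM k a / real a ^ (0 + n) + real (0 + n) * beta k a / real a ^ (0 + n + 1)) (beta 0)"
    by (rule IT1M[where f="beta k" and fm="betaM k", OF bn bmn b0 bm0])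
  finally have 1: "ZM (beta k) (betaM k) (beta n) = (\<Sum>a. ennreal (betaM k a / real a ^ n + real n * beta k a / real a ^ (n + 1)))"
    unfolding ZM_beta0_right by simp
  have "ZM (beta k) (betaM k) (beta n) = ZM (beta k) (betaM k) (\<lambda>b. beta n b / real b ^ 0)" by simp
  also have "\<dots> = ZM (beta 0) (betaM 0) (\<lambda>b. beta n b / real b ^ (0 + k))"
    by (rule IT2M[where g="beta n", OF beta_nonneg beta_at0[OF n]])
  finally have 2: "ZM (beta k) (betaM k) (beta n) = (\<Sum>b. ennreal (Kk 0 b * (beta n b / real b ^ k)))"
    unfolding ZM_beta0_left by simp
  show ?thesis using 1 2 by simp
qed

theorem D3:
  assumes c: "c \<ge> 1"
  shows "(\<Sum>b. ennreal (beta u b * (real c / real (b + c)))) = ennreal (hstar u c)"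
  using c
proof (induction u arbitrary: c)
  case 0
  then show ?case by (subst suminf_finite[of "{0}"]) auto
next
  case (Suc u)
  have e1: "beta (Suc u) b * (real c / real (b + c)) = (\<Sum>i<b. beta u i * (real c / (real b * real (b + c))))" for b
  proof -
    have "(\<Sum>i<b. beta u i * (real c / (real b * real (b + c)))) = (\<Sum>i<b. beta u i) * (real c / (real b * real (b + c)))"
      by (rule sum_distrib_right[symmetric])
    then show ?thesis by (simp add: Bop_def)
  qed
  have "(\<Sum>b. ennreal (beta (Suc u) b * (real c / real (b + c))))
      = (\<Sum>b. ennreal (\<Sum>i<b. beta u i * (real c / (real b * real (b + c)))))"
    by (simp only: e1)
  also have "\<dots> = (\<Sum>i. \<Sum>b. ennreal (if i < b then beta u i * (real c / (real b * real (b + c))) else 0))"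
    by (rule abel_swap) (simp add: beta_nonneg)
  also have "\<dots> = (\<Sum>i. ennreal (beta u i * Kk i c))"
    by (simp add: KT[OF Suc.prems] beta_nonneg del: suminf_ennreal)
  also have "\<dots> = (\<Sum>i. \<Sum>d\<in>{1..c}. ennreal (1 / real d) * ennreal (beta u i * (real d / real (i + d))))"
  proof -
    have "ennreal (beta u i * Kk i c) = (\<Sum>d\<in>{1..c}. ennreal (1 / real d) * ennreal (beta u i * (real d / real (i + d))))" for i
    proof -
      have "beta u i * Kk i c = (\<Sum>d\<in>{1..c}. 1 / real d * (beta u i * (real d / real (i + d))))"
        unfolding Kk_def sum_distrib_left by (intro sum.cong) auto
      then show ?thesis using beta_nonneg[of u i]
        by (simp add: ennreal_mult[symmetric] del: ennreal_mult)
    qed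
    then show ?thesis by simp
  qed
  also have "\<dots> = (\<Sum>d\<in>{1..c}. \<Sum>i. ennreal (1 / real d) * ennreal (beta u i * (real d / real (i + d))))"
    by (rule suminf_sum) auto
  also have "\<dots> = (\<Sum>d\<in>{1..c}. ennreal (1 / real d) * ennreal (hstar u d))"
    using Suc.IH by (intro sum.cong) auto
  also have "\<dots> = ennreal (hstar (Suc u) c)"
    by (simp add: ennreal_mult[symmetric] hstar_nonneg sum_ennreal[symmetric] del: ennreal_mult sum_ennreal)
  finally show ?case .
qed

definition lterm :: "nat list \<Rightarrow> nat list \<Rightarrow> real" where
  "lterm ks ms = (\<Prod>i<length ks. 1 / real (ms ! i) ^ (ks ! i))"

fun chain :: "nat list \<Rightarrow> nat \<Rightarrow> real" where
  "chain [] N = 1"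
| "chain (s # ks) N = (\<Sum>a=1..N. chain ks (a - 1) / real a ^ s)"

fun chainS :: "nat list \<Rightarrow> nat \<Rightarrow> real" where
  "chainS [] N = 1"
| "chainS (s # ks) N = (\<Sum>a=1..N. chainS ks a / real a ^ s)"

definition Sfin :: "nat list \<Rightarrow> nat \<Rightarrow> nat list set" where
  "Sfin ks N = {ms. length ms = length ks \<and> sorted_wrt (>) ms \<and> (\<forall>m\<in>set ms. 1 \<le> m \<and> m \<le> N)}"

definition SfinS :: "nat list \<Rightarrow> nat \<Rightarrow> nat list set" where
  "SfinS ks N = {ms. length ms = length ks \<and> sorted_wrt (\<ge>) ms \<and> (\<forall>m\<in>set ms. 1 \<le> m \<and> m \<le> N)}"

lemma lterm_Cons: "lterm (s # ks) (a # ms) = 1 / real a ^ s * lterm ks ms"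
  unfolding lterm_def length_Cons prod.lessThan_Suc_shift by simp

lemma lterm_nonneg: "lterm ks ms \<ge> 0"
  unfolding lterm_def by (intro prod_nonneg) auto

lemma finite_Sfin: "finite (Sfin ks N)"
proof -
  have "Sfin ks N \<subseteq> {xs. set xs \<subseteq> {1..N} \<and> length xs = length ks}"
    by (auto simp: Sfin_def)
  then show ?thesis by (rule finite_subset) (intro finite_lists_length_eq, simp)
qed

lemma finite_SfinS: "finite (SfinS ks N)"
proof -
  have "SfinS ks N \<subseteq> {xs. set xs \<subseteq> {1..N} \<and> length xs = length ks}"
    by (auto simp: SfinS_def)
  then show ?thesis by (rule finite_subset) (intro finite_lists_length_eq, simp)
qed

lemma Sfin_Nil: "Sfin [] N = {[]}"
  by (auto simp: Sfin_def)

lemma SfinS_Nil: "SfinS [] N = {[]}"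
  by (auto simp: SfinS_def)

lemma Sfin_Cons: "Sfin (s # ks) N = (\<lambda>(a, ms). a # ms) ` (SIGMA a:{1..N}. Sfin ks (a - 1))"
proof (intro equalityI subsetI)
  fix xs assume "xs \<in> Sfin (s # ks) N"
  then obtain a ms where xs: "xs = a # ms" and l: "length ms = length ks"
    and s1: "\<forall>x\<in>set ms. a > x" and s2: "sorted_wrt (>) ms"
    and b: "1 \<le> a" "a \<le> N" and bm: "\<forall>m\<in>set ms. 1 \<le> m \<and> m \<le> N"
    by (cases xs) (auto simp: Sfin_def)
  have "ms \<in> Sfin ks (a - 1)"
    using l s1 s2 bm by (auto simp: Sfin_def)
  then show "xs \<in> (\<lambda>(a, ms). a # ms) ` (SIGMA a:{1..N}. Sfin ks (a - 1))"
    using xs b by auto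
next
  fix xs assume "xs \<in> (\<lambda>(a, ms). a # ms) ` (SIGMA a:{1..N}. Sfin ks (a - 1))"
  then obtain a ms where xs: "xs = a # ms" and a: "a \<in> {1..N}" and ms: "ms \<in> Sfin ks (a - 1)"
    by auto
  show "xs \<in> Sfin (s # ks) N"
    using a ms unfolding xs Sfin_def by auto
qed

lemma SfinS_Cons: "SfinS (s # ks) N = (\<lambda>(a, ms). a # ms) ` (SIGMA a:{1..N}. SfinS ks a)"
proof (intro equalityI subsetI)
  fix xs assume "xs \<in> SfinS (s # ks) N"
  then obtain a ms where xs: "xs = a # ms" and l: "length ms = length ks"
    and s1: "\<forall>x\<in>set ms. a \<ge> x" and s2: "sorted_wrt (\<ge>) ms"
    and b: "1 \<le> a" "a \<le> N" and bm: "\<forall>m\<in>set ms. 1 \<le> m \<and> m \<le> N"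
    by (cases xs) (auto simp: SfinS_def)
  have "ms \<in> SfinS ks a"
    using l s1 s2 bm by (auto simp: SfinS_def)
  then show "xs \<in> (\<lambda>(a, ms). a # ms) ` (SIGMA a:{1..N}. SfinS ks a)"
    using xs b by auto
next
  fix xs assume "xs \<in> (\<lambda>(a, ms). a # ms) ` (SIGMA a:{1..N}. SfinS ks a)"
  then obtain a ms where xs: "xs = a # ms" and a: "a \<in> {1..N}" and ms: "ms \<in> SfinS ks a"
    by auto
  show "xs \<in> SfinS (s # ks) N"
    using a ms unfolding xs SfinS_def by auto
qed

lemma inj_Cons_pair: "inj_on (\<lambda>(a, ms). a # ms) X"
  by (auto simp: inj_on_def)

lemma sum_Sfin: "sum (lterm ks) (Sfin ks N) = chain ks N"
proof (induction ks arbitrary: N)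
  case Nil
  then show ?case by (simp add: Sfin_Nil lterm_def)
next
  case (Cons s ks)
  have "sum (lterm (s # ks)) (Sfin (s # ks) N)
      = sum (lterm (s # ks) \<circ> (\<lambda>(a, ms). a # ms)) (SIGMA a:{1..N}. Sfin ks (a - 1))"
    unfolding Sfin_Cons by (rule sum.reindex[OF inj_Cons_pair])
  also have "\<dots> = (\<Sum>(a, ms)\<in>(SIGMA a:{1..N}. Sfin ks (a - 1)). lterm (s # ks) (a # ms))"
    by (intro sum.cong) auto
  also have "\<dots> = (\<Sum>a\<in>{1..N}. \<Sum>ms\<in>Sfin ks (a - 1). lterm (s # ks) (a # ms))"
    by (rule sum.Sigma[symmetric]) (auto simp: finite_Sfin)
  also have "\<dots> = (\<Sum>a\<in>{1..N}. 1 / real a ^ s * chain ks (a - 1))"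
    by (simp add: lterm_Cons sum_divide_distrib[symmetric] Cons.IH)
  finally show ?case by simp
qed

lemma sum_SfinS: "sum (lterm ks) (SfinS ks N) = chainS ks N"
proof (induction ks arbitrary: N)
  case Nil
  then show ?case by (simp add: SfinS_Nil lterm_def)
next
  case (Cons s ks)
  have "sum (lterm (s # ks)) (SfinS (s # ks) N)
      = sum (lterm (s # ks) \<circ> (\<lambda>(a, ms). a # ms)) (SIGMA a:{1..N}. SfinS ks a)"
    unfolding SfinS_Cons by (rule sum.reindex[OF inj_Cons_pair])
  also have "\<dots> = (\<Sum>(a, ms)\<in>(SIGMA a:{1..N}. SfinS ks a). lterm (s # ks) (a # ms))"
    by (intro sum.cong) auto
  also have "\<dots> = (\<Sum>a\<in>{1..N}. \<Sum>ms\<in>SfinS ks a. lterm (s # ks) (a # ms))"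
    by (rule sum.Sigma[symmetric]) (auto simp: finite_SfinS)
  also have "\<dots> = (\<Sum>a\<in>{1..N}. 1 / real a ^ s * chainS ks a)"
    by (simp add: lterm_Cons sum_divide_distrib[symmetric] Cons.IH)
  finally show ?case by simp
qed

lemma chain_nonneg: "chain ks N \<ge> 0"
  by (induction ks arbitrary: N) (auto intro!: sum_nonneg divide_nonneg_nonneg)

lemma chainS_nonneg: "chainS ks N \<ge> 0"
  by (induction ks arbitrary: N) (auto intro!: sum_nonneg divide_nonneg_nonneg)

lemma infsum_chain:
  fixes T :: "'a set" and Tf :: "nat \<Rightarrow> 'a set" and f :: "'a \<Rightarrow> real" and c :: "nat \<Rightarrow> real"
  assumes nn: "\<And>x. f x \<ge> 0" and sub: "\<And>N. Tf N \<subseteq> T" and fin: "\<And>N. finite (Tf N)"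
    and cover: "\<And>F. finite F \<Longrightarrow> F \<subseteq> T \<Longrightarrow> \<exists>N. F \<subseteq> Tf N"
    and sumeq: "\<And>N. sum f (Tf N) = c N" and bnd: "\<And>N. c N \<le> B"
  shows "ennreal (infsum f T) = (SUP N. ennreal (c N))"
proof -
  have le: "sum f F \<le> B" if fF0: "finite F" and FT0: "F \<subseteq> T" for F
  proof -
    obtain N where N: "F \<subseteq> Tf N" using cover[OF fF0 FT0] by blast
    have "sum f F \<le> sum f (Tf N)" by (rule sum_mono2[OF fin N]) (simp add: nn)
    also have "\<dots> \<le> B" using sumeq bnd by simp
    finally show ?thesis .
  qed
  have summ: "f summable_on T"
  proof (rule nonneg_bdd_above_summable_on)
    show "f x \<ge> 0" if "x \<in> T" for x by (rule nn)
    show "bdd_above (sum f ` {F. F \<subseteq> T \<and> finite F})"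
    proof (rule bdd_aboveI[where M = B])
      fix x assume "x \<in> sum f ` {F. F \<subseteq> T \<and> finite F}"
      then obtain F where "F \<subseteq> T" "finite F" "x = sum f F" by auto
      then show "x \<le> B" using le by simp
    qed
  qed
  have "ennreal (infsum f T) = (SUP F\<in>{F. finite F \<and> F \<subseteq> T}. ennreal (sum f F))"
    by (rule infsum_nonneg_is_SUPREMUM_ennreal[OF summ]) (simp add: nn)
  also have "\<dots> = (SUP N. ennreal (c N))"
  proof (rule antisym)
    show "(SUP F\<in>{F. finite F \<and> F \<subseteq> T}. ennreal (sum f F)) \<le> (SUP N. ennreal (c N))"
    proof (rule SUP_least)
      fix F assume "F \<in> {F. finite F \<and> F \<subseteq> T}"
      then have fF: "finite F" and FT: "F \<subseteq> T" by auto
      obtain N where N: "F \<subseteq> Tf N" using cover[OF fF FT] by blast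
      have "sum f F \<le> sum f (Tf N)" by (rule sum_mono2[OF fin N]) (simp add: nn)
      then have "ennreal (sum f F) \<le> ennreal (c N)" using sumeq by (simp add: ennreal_leI)
      also have "\<dots> \<le> (SUP N. ennreal (c N))" by (rule SUP_upper) simp
      finally show "ennreal (sum f F) \<le> (SUP N. ennreal (c N))" .
    qed
    show "(SUP N. ennreal (c N)) \<le> (SUP F\<in>{F. finite F \<and> F \<subseteq> T}. ennreal (sum f F))"
    proof (rule SUP_least)
      fix N
      have "ennreal (c N) = ennreal (sum f (Tf N))" using sumeq by simp
      also have "\<dots> \<le> (SUP F\<in>{F. finite F \<and> F \<subseteq> T}. ennreal (sum f F))"
        by (rule SUP_upper) (use fin sub in auto)
      finally show "ennreal (c N) \<le> (SUP F\<in>{F. finite F \<and> F \<subseteq> T}. ennreal (sum f F))" .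
    qed
  qed
  finally show ?thesis .
qed

lemma cover_lists:
  fixes F :: "nat list set"
  assumes "finite F"
  shows "\<exists>N. \<forall>ms\<in>F. \<forall>m\<in>set ms. m \<le> N"
proof -
  let ?M = "\<Union>ms\<in>F. set ms"
  have "finite ?M" using assms by auto
  then have "\<forall>m\<in>?M. m \<le> Max (insert 0 ?M)" by auto
  then show ?thesis by blast
qed

lemma mzv_SUP:
  assumes bnd: "\<And>N. chain ks N \<le> B"
  shows "ennreal (mzv ks) = (SUP N. ennreal (chain ks N))"
proof -
  have eq: "(\<lambda>ms. \<Prod>i<length ks. 1 / real (ms ! i) ^ (ks ! i)) = lterm ks"
    by (simp add: lterm_def fun_eq_iff)
  show ?thesis
    unfolding mzv_def eq
  proof (rule infsum_chain[where Tf = "Sfin ks"])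
    show "lterm ks x \<ge> 0" for x by (rule lterm_nonneg)
    show "Sfin ks N \<subseteq> {ms. length ms = length ks \<and> sorted_wrt (>) ms \<and> (\<forall>m\<in>set ms. 1 \<le> m)}" for N
      by (auto simp: Sfin_def)
    show "finite (Sfin ks N)" for N by (rule finite_Sfin)
    show "\<exists>N. F \<subseteq> Sfin ks N" if fF: "finite F"
      and FT: "F \<subseteq> {ms. length ms = length ks \<and> sorted_wrt (>) ms \<and> (\<forall>m\<in>set ms. 1 \<le> m)}" for F
    proof -
      obtain N where "\<forall>ms\<in>F. \<forall>m\<in>set ms. m \<le> N" using cover_lists[OF fF] by blast
      then have "F \<subseteq> Sfin ks N" using FT by (auto simp: Sfin_def)
      then show ?thesis by blast
    qed
    show "sum (lterm ks) (Sfin ks N) = chain ks N" for N by (rule sum_Sfin)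
    show "chain ks N \<le> B" for N by (rule bnd)
  qed
qed

lemma mzv_star_SUP:
  assumes bnd: "\<And>N. chainS ks N \<le> B"
  shows "ennreal (mzv_star ks) = (SUP N. ennreal (chainS ks N))"
proof -
  have eq: "(\<lambda>ms. \<Prod>i<length ks. 1 / real (ms ! i) ^ (ks ! i)) = lterm ks"
    by (simp add: lterm_def fun_eq_iff)
  show ?thesis
    unfolding mzv_star_def eq
  proof (rule infsum_chain[where Tf = "SfinS ks"])
    show "lterm ks x \<ge> 0" for x by (rule lterm_nonneg)
    show "SfinS ks N \<subseteq> {ms. length ms = length ks \<and> sorted_wrt (\<ge>) ms \<and> (\<forall>m\<in>set ms. 1 \<le> m)}" for N
      by (auto simp: SfinS_def)
    show "finite (SfinS ks N)" for N by (rule finite_SfinS)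
    show "\<exists>N. F \<subseteq> SfinS ks N" if fF: "finite F"
      and FT: "F \<subseteq> {ms. length ms = length ks \<and> sorted_wrt (\<ge>) ms \<and> (\<forall>m\<in>set ms. 1 \<le> m)}" for F
    proof -
      obtain N where "\<forall>ms\<in>F. \<forall>m\<in>set ms. m \<le> N" using cover_lists[OF fF] by blast
      then have "F \<subseteq> SfinS ks N" using FT by (auto simp: SfinS_def)
      then show ?thesis by blast
    qed
    show "sum (lterm ks) (SfinS ks N) = chainS ks N" for N by (rule sum_SfinS)
    show "chainS ks N \<le> B" for N by (rule bnd)
  qed
qed

lemma sum_lessSuc: "(\<Sum>i<Suc N. g i) = g 0 + (\<Sum>i=1..N. (g i :: 'a :: comm_monoid_add))"
  by (induction N) (auto simp: add.assoc)

lemma SUP_partial: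
  fixes u :: "nat \<Rightarrow> real"
  assumes nn: "\<And>a. u a \<ge> 0" and u0: "u 0 = 0"
  shows "(SUP N. ennreal (\<Sum>a=1..N. u a)) = (\<Sum>a. ennreal (u a))"
proof -
  have "(\<Sum>a. ennreal (u a)) = (SUP n. \<Sum>a<n. ennreal (u a))" by (rule suminf_eq_SUP)
  also have "\<dots> = (SUP n. ennreal (\<Sum>a<n. u a))" using nn by simp
  also have "\<dots> = (SUP N. ennreal (\<Sum>a=1..N. u a))"
  proof (rule antisym)
    show "(SUP n. ennreal (\<Sum>a<n. u a)) \<le> (SUP N. ennreal (\<Sum>a=1..N. u a))"
    proof (rule SUP_least)
      fix n
      have "(\<Sum>a<n. u a) \<le> (\<Sum>a<Suc n. u a)" using nn by (simp add: sum.lessThan_Suc)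
      also have "\<dots> = (\<Sum>a=1..n. u a)" using u0 by (simp add: sum_lessSuc del: sum.lessThan_Suc)
      finally have "ennreal (\<Sum>a<n. u a) \<le> ennreal (\<Sum>a=1..n. u a)" by (rule ennreal_leI)
      also have "\<dots> \<le> (SUP N. ennreal (\<Sum>a=1..N. u a))" by (rule SUP_upper) simp
      finally show "ennreal (\<Sum>a<n. u a) \<le> (SUP N. ennreal (\<Sum>a=1..N. u a))" .
    qed
    show "(SUP N. ennreal (\<Sum>a=1..N. u a)) \<le> (SUP n. ennreal (\<Sum>a<n. u a))"
    proof (rule SUP_least)
      fix N
      have "(\<Sum>a=1..N. u a) = (\<Sum>a<Suc N. u a)" using u0 by (simp add: sum_lessSuc del: sum.lessThan_Suc)
      then have "ennreal (\<Sum>a=1..N. u a) = ennreal (\<Sum>a<Suc N. u a)" by simp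
      also have "\<dots> \<le> (SUP n. ennreal (\<Sum>a<n. u a))" by (rule SUP_upper) simp
      finally show "ennreal (\<Sum>a=1..N. u a) \<le> (SUP n. ennreal (\<Sum>a<n. u a))" .
    qed
  qed
  finally show ?thesis by simp
qed

lemma partial_le_suminf:
  fixes u :: "nat \<Rightarrow> real"
  assumes nn: "\<And>a. u a \<ge> 0" and fin: "(\<Sum>a. ennreal (u a)) \<noteq> top"
  shows "(\<Sum>a=1..N. u a) \<le> suminf u"
proof -
  have summ: "summable u" by (rule summable_suminf_not_top[OF nn fin])
  show ?thesis by (rule sum_le_suminf[OF summ]) (auto simp: nn)
qed

lemma mzv_cons:
  assumes s: "s \<ge> 1" and fin: "(\<Sum>a. ennreal (chain ks (a - 1) / real a ^ s)) \<noteq> top"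
  shows "ennreal (mzv (s # ks)) = (\<Sum>a. ennreal (chain ks (a - 1) / real a ^ s))"
proof -
  define u where "u a = chain ks (a - 1) / real a ^ s" for a
  have nn: "u a \<ge> 0" for a by (simp add: u_def chain_nonneg)
  have u0: "u 0 = 0" using s by (simp add: u_def)
  have ch: "chain (s # ks) N = (\<Sum>a=1..N. u a)" for N by (simp add: u_def)
  have fin': "(\<Sum>a. ennreal (u a)) \<noteq> top" using fin by (simp add: u_def)
  have bnd: "chain (s # ks) N \<le> suminf u" for N
    unfolding ch by (rule partial_le_suminf[OF nn fin'])
  have "ennreal (mzv (s # ks)) = (SUP N. ennreal (chain (s # ks) N))"
    by (rule mzv_SUP[OF bnd])
  also have "\<dots> = (\<Sum>a. ennreal (u a))" unfolding ch by (rule SUP_partial[where u=u, OF nn u0])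
  finally show ?thesis by (simp add: u_def)
qed

lemma mzv_star_cons:
  assumes s: "s \<ge> 1" and fin: "(\<Sum>a. ennreal (chainS ks a / real a ^ s)) \<noteq> top"
  shows "ennreal (mzv_star (s # ks)) = (\<Sum>a. ennreal (chainS ks a / real a ^ s))"
proof -
  define u where "u a = chainS ks a / real a ^ s" for a
  have nn: "u a \<ge> 0" for a by (simp add: u_def chainS_nonneg)
  have u0: "u 0 = 0" using s by (simp add: u_def)
  have ch: "chainS (s # ks) N = (\<Sum>a=1..N. u a)" for N by (simp add: u_def)
  have fin': "(\<Sum>a. ennreal (u a)) \<noteq> top" using fin by (simp add: u_def)
  have bnd: "chainS (s # ks) N \<le> suminf u" for N
    unfolding ch by (rule partial_le_suminf[OF nn fin'])
  have "ennreal (mzv_star (s # ks)) = (SUP N. ennreal (chainS (s # ks) N))"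
    by (rule mzv_star_SUP[OF bnd])
  also have "\<dots> = (\<Sum>a. ennreal (u a))" unfolding ch by (rule SUP_partial[where u=u, OF nn u0])
  finally show ?thesis by (simp add: u_def)
qed

lemma chain_rep: "chain (replicate r 1) N = (\<Sum>i<Suc N. beta r i)"
proof (induction r arbitrary: N)
  case 0
  then show ?case by (simp add: sum_lessSuc)
next
  case (Suc r)
  have "chain (replicate (Suc r) 1) N = (\<Sum>a=1..N. chain (replicate r 1) (a - 1) / real a)"
    by simp
  also have "\<dots> = (\<Sum>a=1..N. (\<Sum>i<a. beta r i) / real a)"
  proof (intro sum.cong refl)
    fix a assume "a \<in> {1..N}"
    then have "Suc (a - 1) = a" by auto
    then show "chain (replicate r 1) (a - 1) / real a = (\<Sum>i<a. beta r i) / real a"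
      by (simp only: Suc.IH)
  qed
  also have "\<dots> = (\<Sum>i<Suc N. beta (Suc r) i)"
    by (simp add: sum_lessSuc Bop_def del: sum.lessThan_Suc)
  finally show ?case .
qed

lemma chain_rep': "chain (replicate r (Suc 0)) N = (\<Sum>i<Suc N. beta r i)"
  using chain_rep[of r N] by simp

lemma chainS_rep: "chainS (replicate n 1) c = hstar n c"
  by (induction n arbitrary: c) auto

lemma chainM:
  "(\<Sum>j<r. chain (replicate j 1 @ 2 # replicate (r - 1 - j) 1) N) = (\<Sum>i<Suc N. betaM r i)"
proof (induction r arbitrary: N)
  case 0
  then show ?case by simp
next
  case (Suc r)
  have c0: "chain (replicate 0 1 @ 2 # replicate (Suc r - 1 - 0) 1) N = (\<Sum>a=1..N. (\<Sum>i<a. beta r i) / real a ^ 2)"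
  proof -
    have "chain (replicate 0 1 @ 2 # replicate (Suc r - 1 - 0) 1) N = (\<Sum>a=1..N. chain (replicate r 1) (a - 1) / real a ^ 2)"
      by simp
    also have "\<dots> = (\<Sum>a=1..N. (\<Sum>i<a. beta r i) / real a ^ 2)"
    proof (intro sum.cong refl)
      fix a assume "a \<in> {1..N}"
      then have "Suc (a - 1) = a" by auto
      then show "chain (replicate r 1) (a - 1) / real a ^ 2 = (\<Sum>i<a. beta r i) / real a ^ 2"
        by (simp only: chain_rep)
    qed
    finally show ?thesis .
  qed
  have cS: "(\<Sum>j<r. chain (replicate (Suc j) 1 @ 2 # replicate (Suc r - 1 - Suc j) 1) N)
      = (\<Sum>a=1..N. (\<Sum>i<a. betaM r i) / real a)"
  proof -
    have "(\<Sum>j<r. chain (replicate (Suc j) 1 @ 2 # replicate (Suc r - 1 - Suc j) 1) N)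
        = (\<Sum>j<r. \<Sum>a=1..N. chain (replicate j 1 @ 2 # replicate (r - 1 - j) 1) (a - 1) / real a)"
      by (intro sum.cong) auto
    also have "\<dots> = (\<Sum>a=1..N. \<Sum>j<r. chain (replicate j 1 @ 2 # replicate (r - 1 - j) 1) (a - 1) / real a)"
      by (rule sum.swap)
    also have "\<dots> = (\<Sum>a=1..N. (\<Sum>i<a. betaM r i) / real a)"
    proof (intro sum.cong refl)
      fix a assume "a \<in> {1..N}"
      then have "Suc (a - 1) = a" by auto
      then show "(\<Sum>j<r. chain (replicate j 1 @ 2 # replicate (r - 1 - j) 1) (a - 1) / real a)
          = (\<Sum>i<a. betaM r i) / real a"
        using Suc.IH[of "a - 1"] by (simp add: sum_divide_distrib[symmetric])
    qed
    finally show ?thesis .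
  qed
  have "(\<Sum>j<Suc r. chain (replicate j 1 @ 2 # replicate (Suc r - 1 - j) 1) N)
      = chain (replicate 0 1 @ 2 # replicate (Suc r - 1 - 0) 1) N
        + (\<Sum>j<r. chain (replicate (Suc j) 1 @ 2 # replicate (Suc r - 1 - Suc j) 1) N)"
    by (rule sum.lessThan_Suc_shift)
  also have "\<dots> = (\<Sum>a=1..N. (\<Sum>i<a. beta r i) / real a ^ 2 + (\<Sum>i<a. betaM r i) / real a)"
    unfolding c0 cS by (simp add: sum.distrib)
  also have "\<dots> = (\<Sum>a=1..N. betaM (Suc r) a)"
  proof (intro sum.cong refl)
    fix a assume "a \<in> {1..N}"
    then have a: "real a > 0" by auto
    have "betaM (Suc r) a = ((\<Sum>i<a. betaM r i) + (\<Sum>i<a. beta r i) / real a) / real a"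
      by (simp add: BopM_def sum.distrib sum_divide_distrib)
    then show "(\<Sum>i<a. beta r i) / real a ^ 2 + (\<Sum>i<a. betaM r i) / real a = betaM (Suc r) a"
      using a by (simp add: field_simps power2_eq_square)
  qed
  also have "\<dots> = (\<Sum>i<Suc N. betaM (Suc r) i)"
    by (simp add: sum_lessSuc BopM_def del: sum.lessThan_Suc)
  finally show ?case .
qed

lemma zeta_fin:
  assumes s: "s \<ge> 2"
  shows "(\<Sum>c. ennreal (1 / real c ^ s)) \<noteq> top"
proof -
  have "summable (\<lambda>c. inverse (real c ^ s))"
    by (rule inverse_power_summable[OF s])
  then have summ: "summable (\<lambda>c. 1 / real c ^ s)"
    by (simp only: inverse_eq_divide)
  show ?thesis by (rule ennreal_suminf_neq_top[OF summ]) simp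
qed

lemma beta1: "beta 1 b = 1 / real b"
  by (cases b) (auto simp: Bop_def)

lemma betaM1: "betaM 1 a = 1 / real a ^ 2"
proof (cases a)
  case 0 then show ?thesis by (simp add: BopM_def)
next
  case (Suc m)
  have "(\<Sum>i<Suc m. (if i = 0 then 1 else 0) / real (Suc m)) = 1 / real (Suc m)"
    by (subst sum.lessThan_Suc_shift) simp
  then show ?thesis using Suc by (simp add: BopM_def power2_eq_square)
qed

lemma ennreal_suminf_mono:
  fixes u v :: "nat \<Rightarrow> real"
  assumes "\<And>a. u a \<le> v a"
  shows "(\<Sum>a. ennreal (u a)) \<le> (\<Sum>a. ennreal (v a))"
  by (intro suminf_le) (auto intro: ennreal_leI assms)

lemma zfin:
  assumes t: "t \<ge> 1"
  shows "(\<Sum>a. ennreal (beta (Suc r) a / real a ^ t)) \<noteq> top"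
proof -
  have "(\<Sum>a. ennreal (beta (Suc r) a / real a ^ t)) \<le> (\<Sum>a. ennreal (beta (Suc r) a / real a ^ 1))"
  proof (rule ennreal_suminf_mono)
    fix a
    show "beta (Suc r) a / real a ^ t \<le> beta (Suc r) a / real a ^ 1"
    proof (cases "a = 0")
      case True then show ?thesis by (simp add: Bop_def)
    next
      case False
      then have "real a ^ 1 \<le> real a ^ t" using t by (intro power_increasing) auto
      then show ?thesis using False beta_nonneg[of "Suc r" a]
        by (intro divide_left_mono) auto
    qed
  qed
  also have "\<dots> = (\<Sum>b. ennreal (beta 1 b / real b ^ Suc r))"
    by (rule D1) simp
  also have "\<dots> = (\<Sum>b. ennreal (1 / real b ^ Suc (Suc r)))"
    by (simp only: beta1) (simp add: field_simps)
  also have "\<dots> < top"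
  proof -
    have zf: "(\<Sum>c. ennreal (1 / real c ^ Suc (Suc r))) \<noteq> top" by (rule zeta_fin) simp
    then show ?thesis by (rule less_top[THEN iffD1])
  qed
  finally show ?thesis by simp
qed

lemma P2fin:
  assumes n: "n \<ge> 1" and k: "k \<ge> 1"
  shows "(\<Sum>b. ennreal (Kk 0 b * (beta n b / real b ^ k))) \<noteq> top"
proof -
  have "(\<Sum>b. ennreal (Kk 0 b * (beta n b / real b ^ k))) \<le> (\<Sum>b. ennreal (Kk 0 b * (beta n b / real b ^ 1)))"
  proof (rule ennreal_suminf_mono)
    fix b
    show "Kk 0 b * (beta n b / real b ^ k) \<le> Kk 0 b * (beta n b / real b ^ 1)"
    proof (cases "b = 0")
      case True then show ?thesis by simp
    next
      case False
      then have "real b ^ 1 \<le> real b ^ k" using k by (intro power_increasing) auto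
      then have "beta n b / real b ^ k \<le> beta n b / real b ^ 1"
        using False beta_nonneg[of n b] by (intro divide_left_mono) auto
      then show ?thesis by (intro mult_left_mono Kk_nonneg)
    qed
  qed
  also have "\<dots> = (\<Sum>a. ennreal (betaM 1 a / real a ^ n + real n * beta 1 a / real a ^ (n + 1)))"
    by (rule D2[OF n, of 1, symmetric]) simp
  also have "\<dots> = (\<Sum>a. ennreal (real (Suc n)) * ennreal (1 / real a ^ (n + 2)))"
  proof (intro suminf_cong)
    fix a
    have e: "betaM 1 a / real a ^ n + real n * beta 1 a / real a ^ (n + 1) = real (Suc n) * (1 / real a ^ (n + 2))"
    proof (cases "a = 0")
      case True then show ?thesis by (simp only: betaM1 beta1) simp
    next
      case False then show ?thesis by (simp only: betaM1 beta1) (simp add: field_simps power2_eq_square)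
    qed
    show "ennreal (betaM 1 a / real a ^ n + real n * beta 1 a / real a ^ (n + 1)) =
        ennreal (real (Suc n)) * ennreal (1 / real a ^ (n + 2))"
      unfolding e by (rule ennreal_mult) simp_all
  qed
  also have "\<dots> = ennreal (real (Suc n)) * (\<Sum>a. ennreal (1 / real a ^ (n + 2)))"
    by simp
  also have "\<dots> < top"
  proof -
    have zf: "(\<Sum>a. ennreal (1 / real a ^ (n + 2))) \<noteq> top" by (rule zeta_fin) simp
    then have h2: "(\<Sum>a. ennreal (1 / real a ^ (n + 2))) < top" by (rule less_top[THEN iffD1])
    have h1: "ennreal (real (Suc n)) < top" by simp
    show ?thesis using ennreal_mult_less_top[of "ennreal (real (Suc n))" "\<Sum>a. ennreal (1 / real a ^ (n + 2))"] h1 h2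
      by blast
  qed
  finally show ?thesis by simp
qed

lemma M1:
  assumes t: "t \<ge> 2"
  shows "ennreal (mzv (t # replicate r 1)) = (\<Sum>a. ennreal (beta (Suc r) a / real a ^ (t - 1)))"
proof -
  have eq: "chain (replicate r 1) (a - 1) / real a ^ t = beta (Suc r) a / real a ^ (t - 1)" for a
  proof (cases "a = 0")
    case True then show ?thesis using t by (simp add: Bop_def)
  next
    case False
    then have "Suc (a - 1) = a" by simp
    then have "chain (replicate r 1) (a - 1) = (\<Sum>i<a. beta r i)" by (simp only: chain_rep)
    moreover have "real a ^ t = real a * real a ^ (t - 1)" using t
      by (cases t) auto
    ultimately show ?thesis using False by (simp add: Bop_def field_simps)
  qed
  have "ennreal (mzv (t # replicate r 1)) = (\<Sum>a. ennreal (chain (replicate r 1) (a - 1) / real a ^ t))"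
  proof (rule mzv_cons)
    show "(\<Sum>a. ennreal (chain (replicate r 1) (a - 1) / real a ^ t)) \<noteq> top"
      unfolding eq by (rule zfin) (use t in simp)
  qed (use t in simp)
  also have "\<dots> = (\<Sum>a. ennreal (beta (Suc r) a / real a ^ (t - 1)))" by (simp only: eq)
  finally show ?thesis .
qed

lemma M2:
  assumes s: "s \<ge> 2"
  shows "ennreal (mzv [s]) = (\<Sum>c. ennreal (1 / real c ^ s))"
proof -
  have "ennreal (mzv (s # [])) = (\<Sum>a. ennreal (chain [] (a - 1) / real a ^ s))"
    by (rule mzv_cons) (use s zeta_fin[OF s] in simp_all)
  then show ?thesis by simp
qed

lemma geom:
  fixes b c :: real
  assumes b: "b > 0"
  shows "(b + c) * (\<Sum>r<m. (-c)^r / b^(Suc r)) = 1 - (-c)^m / b^m"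
proof (induction m)
  case 0
  then show ?case by simp
next
  case (Suc m)
  have "(b + c) * (\<Sum>r<Suc m. (-c)^r / b^(Suc r)) = (b + c) * (\<Sum>r<m. (-c)^r / b^(Suc r)) + (b + c) * ((-c)^m / b^(Suc m))"
    by (simp add: distrib_left)
  also have "\<dots> = 1 - (-c)^m / b^m + (b + c) * ((-c)^m / b^(Suc m))"
    using Suc.IH by simp
  also have "\<dots> = 1 - (-c)^(Suc m) / b^(Suc m)"
    using b by (simp add: field_simps)
  finally show ?case .
qed

lemma altsum:
  fixes b c m :: nat and bt :: real
  assumes b: "b \<ge> 1" and c: "c \<ge> 1"
  shows "(\<Sum>r<m. (-1)^r * (1 / real c ^ (Suc m - r) * (bt / real b ^ Suc r)))
       = bt * (1 / (real c ^ Suc m * real (b + c))) + (-1)^(Suc m) * ((bt / real b ^ Suc m) * (real b / (real c * real (c + b))))"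
proof -
  have bp: "real b > 0" and cp: "real c > 0" using b c by auto
  have tm: "(-1)^r * (1 / real c ^ (Suc m - r) * (bt / real b ^ Suc r))
      = bt / real c ^ Suc m * ((- real c)^r / real b ^ Suc r)" if "r < m" for r
  proof -
    have "real c ^ Suc m = real c ^ (r + (Suc m - r))"
      using that by simp
    also have "\<dots> = real c ^ r * real c ^ (Suc m - r)" by (rule power_add)
    finally have "real c ^ Suc m = real c ^ r * real c ^ (Suc m - r)" .
    moreover have "(- real c)^r = (-1)^r * real c ^ r" by (rule power_minus)
    moreover have "real c ^ r > 0" "real c ^ (Suc m - r) > 0" "real b ^ Suc r > 0"
      using cp bp by auto
    ultimately show ?thesis using c that by (simp add: field_simps)
  qed
  have "(\<Sum>r<m. (-1)^r * (1 / real c ^ (Suc m - r) * (bt / real b ^ Suc r)))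
      = (\<Sum>r<m. bt / real c ^ Suc m * ((- real c)^r / real b ^ Suc r))"
    by (rule sum.cong[OF refl]) (rule tm, simp)
  also have "\<dots> = bt / real c ^ Suc m * (\<Sum>r<m. (- real c)^r / real b ^ Suc r)"
    by (rule sum_distrib_left[symmetric])
  also have "(\<Sum>r<m. (- real c)^r / real b ^ Suc r) = (1 - (- real c)^m / real b ^ m) / (real b + real c)"
  proof -
    have nz: "real b + real c \<noteq> 0" using bp cp by simp
    have "(\<Sum>r<m. (- real c)^r / real b ^ Suc r)
        = ((real b + real c) * (\<Sum>r<m. (- real c)^r / real b ^ Suc r)) / (real b + real c)"
      using nz by simp
    also have "\<dots> = (1 - (- real c)^m / real b ^ m) / (real b + real c)"
      by (simp only: geom[OF bp, of "real c" m])
    finally show ?thesis .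
  qed
  also have "(- real c)^m = (-1)^m * real c ^ m" by (rule power_minus)
  finally have e: "(\<Sum>r<m. (-1)^r * (1 / real c ^ (Suc m - r) * (bt / real b ^ Suc r)))
      = bt / real c ^ Suc m * ((1 - (-1)^m * real c ^ m / real b ^ m) / (real b + real c))" .
  have cm: "real c ^ m > 0" and bm: "real b ^ m > 0" using bp cp by auto
  have alg: "bt / (Cv * cmv) * ((1 - P * cmv / bmv) / D)
      = bt * (1 / (Cv * cmv * D)) + (- 1 * P) * ((bt / (Bv * bmv)) * (Bv / (Cv * D)))"
    if "Bv > 0" "Cv > 0" "cmv > 0" "bmv > 0" "D > 0" for Bv Cv cmv bmv P D :: real
    using that by (simp add: field_simps)
  have dp: "real b + real c > 0" using bp cp by simp
  have rc: "real (c + b) = real b + real c" by simp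
  have rc': "real (b + c) = real b + real c" by simp
  show ?thesis unfolding e
    unfolding rc rc' power_Suc
    by (rule alg[OF bp cp cm bm dp])
qed

lemma sum_alt_split:
  fixes y :: "nat \<Rightarrow> real"
  shows "(\<Sum>r<m. (-1)^r * y r) = (\<Sum>r\<in>{..<m} \<inter> {r. even r}. y r) - (\<Sum>r\<in>{..<m} \<inter> - {r. even r}. y r)"
proof -
  have "(\<Sum>r<m. (-1)^r * y r) = (\<Sum>r<m. if even r then y r else - y r)"
    by (intro sum.cong) auto
  also have "\<dots> = (\<Sum>r\<in>{..<m} \<inter> {r. even r}. y r) + (\<Sum>r\<in>{..<m} \<inter> - {r. even r}. - y r)"
    by (rule sum.If_cases) simp
  finally show ?thesis by (simp add: sum_negf)
qed

lemma ennreal_dsum_lin: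
  fixes f :: "nat \<Rightarrow> nat \<Rightarrow> nat \<Rightarrow> real" and g :: "nat \<Rightarrow> nat \<Rightarrow> real"
  assumes R: "finite R" and f: "\<And>r c b. f r c b \<ge> 0" and g: "\<And>c b. g c b \<ge> 0"
  shows "(\<Sum>c. \<Sum>b. ennreal ((\<Sum>r\<in>R. f r c b) + g c b))
       = (\<Sum>r\<in>R. \<Sum>c. \<Sum>b. ennreal (f r c b)) + (\<Sum>c. \<Sum>b. ennreal (g c b))"
proof -
  have "ennreal ((\<Sum>r\<in>R. f r c b) + g c b) = (\<Sum>r\<in>R. ennreal (f r c b)) + ennreal (g c b)" for c b
    using f g by (simp add: ennreal_plus sum_nonneg)
  then have "(\<Sum>c. \<Sum>b. ennreal ((\<Sum>r\<in>R. f r c b) + g c b))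
      = (\<Sum>c. \<Sum>b. (\<Sum>r\<in>R. ennreal (f r c b)) + ennreal (g c b))" by simp
  also have "\<dots> = (\<Sum>c. (\<Sum>b. \<Sum>r\<in>R. ennreal (f r c b)) + (\<Sum>b. ennreal (g c b)))"
    by (subst suminf_add[symmetric]) auto
  also have "\<dots> = (\<Sum>c. (\<Sum>r\<in>R. \<Sum>b. ennreal (f r c b)) + (\<Sum>b. ennreal (g c b)))"
    by (subst suminf_sum) auto
  also have "\<dots> = (\<Sum>c. \<Sum>r\<in>R. \<Sum>b. ennreal (f r c b)) + (\<Sum>c. \<Sum>b. ennreal (g c b))"
    by (subst suminf_add[symmetric]) auto
  also have "(\<Sum>c. \<Sum>r\<in>R. \<Sum>b. ennreal (f r c b)) = (\<Sum>r\<in>R. \<Sum>c. \<Sum>b. ennreal (f r c b))"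
    by (subst suminf_sum) auto
  finally show ?thesis .
qed

lemma ennreal_dsum_add:
  fixes g h :: "nat \<Rightarrow> nat \<Rightarrow> real"
  assumes g: "\<And>c b. g c b \<ge> 0" and h: "\<And>c b. h c b \<ge> 0"
  shows "(\<Sum>c. \<Sum>b. ennreal (g c b + h c b)) = (\<Sum>c. \<Sum>b. ennreal (g c b)) + (\<Sum>c. \<Sum>b. ennreal (h c b))"
proof -
  have "(\<Sum>c. \<Sum>b. ennreal (g c b + h c b)) = (\<Sum>c. \<Sum>b. ennreal (g c b) + ennreal (h c b))"
    using g h by (simp add: ennreal_plus)
  also have "\<dots> = (\<Sum>c. (\<Sum>b. ennreal (g c b)) + (\<Sum>b. ennreal (h c b)))"
    by (subst suminf_add[symmetric]) auto
  also have "\<dots> = (\<Sum>c. \<Sum>b. ennreal (g c b)) + (\<Sum>c. \<Sum>b. ennreal (h c b))"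
    by (subst suminf_add[symmetric]) auto
  finally show ?thesis .
qed

lemma mzv_nonneg: "mzv ks \<ge> 0"
  unfolding mzv_def by (intro infsum_nonneg prod_nonneg) auto

lemma mzv_star_nonneg: "mzv_star ks \<ge> 0"
  unfolding mzv_star_def by (intro infsum_nonneg prod_nonneg) auto

lemma chainM':
  assumes k: "k \<ge> 1"
  shows "(\<Sum>j<k - 1. chain (replicate j 1 @ [2] @ replicate (k - 2 - j) 1) N) = (\<Sum>i<Suc N. betaM (k - 1) i)"
proof -
  have "(\<Sum>j<k - 1. chain (replicate j 1 @ [2] @ replicate (k - 2 - j) 1) N)
      = (\<Sum>j<k - 1. chain (replicate j 1 @ 2 # replicate (k - 1 - 1 - j) 1) N)"
  proof (intro sum.cong refl)
    fix j
    have "k - 2 - j = k - 1 - 1 - j" by simp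
    then show "chain (replicate j 1 @ [2] @ replicate (k - 2 - j) 1) N = chain (replicate j 1 @ 2 # replicate (k - 1 - 1 - j) 1) N"
      by simp
  qed
  also have "\<dots> = (\<Sum>i<Suc N. betaM (k - 1) i)" by (rule chainM)
  finally show ?thesis .
qed

lemma Bpart:
  assumes k: "k \<ge> 1" and n: "n \<ge> 1"
  shows "ennreal ((\<Sum>j<k - 1. mzv ((n + 1) # replicate j 1 @ [2] @ replicate (k - 2 - j) 1))
              + real (n + 1) * mzv ((n + 2) # replicate (k - 1) 1))
       = (\<Sum>b. ennreal (Kk 0 b * (beta n b / real b ^ k)))"
proof -
  obtain m where km: "k = Suc m" using k by (cases k) auto
  define Lj where "Lj j = (replicate j 1 @ [2] @ replicate (k - 2 - j) 1 :: nat list)" for j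
  define W where "W a = betaM k a / real a ^ n + real n * beta k a / real a ^ (n + 1)" for a
  have Wnn: "W a \<ge> 0" for a by (simp add: W_def beta_nonneg betaM_nonneg)
  have sumW: "(\<Sum>a. ennreal (W a)) = (\<Sum>b. ennreal (Kk 0 b * (beta n b / real b ^ k)))"
    unfolding W_def by (rule D2[OF n k])
  have Wfin: "(\<Sum>a. ennreal (W a)) \<noteq> top" unfolding sumW by (rule P2fin[OF n k])
  define SM where "SM a = (\<Sum>i<a. betaM m i)" for a
  define SB where "SB a = (\<Sum>i<a. beta m i)" for a
  have SMnn: "SM a \<ge> 0" for a by (simp add: SM_def sum_nonneg betaM_nonneg)
  have SBnn: "SB a \<ge> 0" for a by (simp add: SB_def sum_nonneg beta_nonneg)
  have betak: "beta k a = SB a / real a" for a by (simp add: km SB_def Bop_def)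
  have betaMk: "betaM k a = (SM a + SB a / real a) / real a" for a
    by (simp add: km SM_def SB_def BopM_def sum.distrib sum_divide_distrib)
  have chsum: "(\<Sum>j<k - 1. chain (Lj j) (a - 1)) = SM a" if "a \<ge> 1" for a
  proof -
    have "Suc (a - 1) = a" using that by simp
    then show ?thesis using chainM'[OF k, of "a - 1"] by (simp add: Lj_def SM_def km)
  qed
  have val: "(\<Sum>j<k - 1. chain (Lj j) (a - 1) / real a ^ (n + 1)) + real (n + 1) * (beta k a / real a ^ (n + 1)) = W a" for a
  proof (cases "a = 0")
    case True then show ?thesis by (simp add: W_def betak betaMk)
  next
    case False
    then have a: "real a > 0" by simp
    have "(\<Sum>j<k - 1. chain (Lj j) (a - 1) / real a ^ (n + 1)) = SM a / real a ^ (n + 1)"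
      using chsum[of a] False by (simp add: sum_divide_distrib[symmetric])
    then show ?thesis using a by (simp add: W_def betak betaMk field_simps)
  qed
  have bnd: "chain (Lj j) (a - 1) / real a ^ (n + 1) \<le> W a" if "j < k - 1" for j a
  proof (cases "a = 0")
    case True then show ?thesis by (simp add: Wnn)
  next
    case False
    then have a: "real a > 0" by simp
    have "chain (Lj j) (a - 1) \<le> (\<Sum>j<k - 1. chain (Lj j) (a - 1))"
      by (rule member_le_sum) (use that chain_nonneg in auto)
    also have "\<dots> = SM a" using chsum[of a] False by simp
    finally have "chain (Lj j) (a - 1) / real a ^ (n + 1) \<le> SM a / real a ^ (n + 1)"
      using a by (simp add: divide_right_mono)
    also have "\<dots> \<le> W a"
      using a SMnn[of a] SBnn[of a] by (simp add: W_def betak betaMk field_simps)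
    finally show ?thesis .
  qed
  have mj: "ennreal (mzv ((n + 1) # Lj j)) = (\<Sum>a. ennreal (chain (Lj j) (a - 1) / real a ^ (n + 1)))"
    if "j < k - 1" for j
  proof (rule mzv_cons)
    have "(\<Sum>a. ennreal (chain (Lj j) (a - 1) / real a ^ (n + 1))) \<le> (\<Sum>a. ennreal (W a))"
      by (rule ennreal_suminf_mono) (rule bnd[OF that])
    then show "(\<Sum>a. ennreal (chain (Lj j) (a - 1) / real a ^ (n + 1))) \<noteq> top"
      using Wfin by (auto simp: top_unique)
  qed simp
  have part1: "ennreal (\<Sum>j<k - 1. mzv ((n + 1) # Lj j))
      = (\<Sum>a. ennreal (\<Sum>j<k - 1. chain (Lj j) (a - 1) / real a ^ (n + 1)))"
  proof -
    have "ennreal (\<Sum>j<k - 1. mzv ((n + 1) # Lj j)) = (\<Sum>j<k - 1. ennreal (mzv ((n + 1) # Lj j)))"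
      by (simp add: mzv_nonneg)
    also have "\<dots> = (\<Sum>j<k - 1. \<Sum>a. ennreal (chain (Lj j) (a - 1) / real a ^ (n + 1)))"
      by (rule sum.cong[OF refl]) (rule mj, simp)
    also have "\<dots> = (\<Sum>a. \<Sum>j<k - 1. ennreal (chain (Lj j) (a - 1) / real a ^ (n + 1)))"
      by (rule suminf_sum[symmetric]) auto
    also have "\<dots> = (\<Sum>a. ennreal (\<Sum>j<k - 1. chain (Lj j) (a - 1) / real a ^ (n + 1)))"
      by (simp add: chain_nonneg)
    finally show ?thesis .
  qed
  have part2: "ennreal (real (n + 1) * mzv ((n + 2) # replicate (k - 1) 1))
      = (\<Sum>a. ennreal (real (n + 1) * (beta k a / real a ^ (n + 1))))"
  proof -
    have "ennreal (mzv ((n + 2) # replicate (k - 1) 1)) = (\<Sum>a. ennreal (beta (Suc (k - 1)) a / real a ^ (n + 2 - 1)))"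
      by (rule M1) simp
    also have "\<dots> = (\<Sum>a. ennreal (beta k a / real a ^ (n + 1)))" using km by simp
    finally have e: "ennreal (mzv ((n + 2) # replicate (k - 1) 1)) = (\<Sum>a. ennreal (beta k a / real a ^ (n + 1)))" .
    have "ennreal (real (n + 1) * mzv ((n + 2) # replicate (k - 1) 1))
        = ennreal (real (n + 1)) * ennreal (mzv ((n + 2) # replicate (k - 1) 1))"
      by (rule ennreal_mult) (simp_all add: mzv_nonneg)
    also have "\<dots> = (\<Sum>a. ennreal (real (n + 1)) * ennreal (beta k a / real a ^ (n + 1)))"
      unfolding e by simp
    also have "\<dots> = (\<Sum>a. ennreal (real (n + 1) * (beta k a / real a ^ (n + 1))))"
      by (intro suminf_cong) (rule ennreal_mult[symmetric], simp_all add: beta_nonneg)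
    finally show ?thesis .
  qed
  have "ennreal ((\<Sum>j<k - 1. mzv ((n + 1) # Lj j)) + real (n + 1) * mzv ((n + 2) # replicate (k - 1) 1))
      = ennreal (\<Sum>j<k - 1. mzv ((n + 1) # Lj j)) + ennreal (real (n + 1) * mzv ((n + 2) # replicate (k - 1) 1))"
    by (rule ennreal_plus) (simp_all add: mzv_nonneg sum_nonneg)
  also have "\<dots> = (\<Sum>a. ennreal (\<Sum>j<k - 1. chain (Lj j) (a - 1) / real a ^ (n + 1)))
                  + (\<Sum>a. ennreal (real (n + 1) * (beta k a / real a ^ (n + 1))))"
    unfolding part1 part2 ..
  also have "\<dots> = (\<Sum>a. ennreal (\<Sum>j<k - 1. chain (Lj j) (a - 1) / real a ^ (n + 1))
                  + ennreal (real (n + 1) * (beta k a / real a ^ (n + 1))))"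
    by (rule suminf_add) auto
  also have "\<dots> = (\<Sum>a. ennreal (W a))"
  proof (intro suminf_cong)
    fix a
    show "ennreal (\<Sum>j<k - 1. chain (Lj j) (a - 1) / real a ^ (n + 1)) + ennreal (real (n + 1) * (beta k a / real a ^ (n + 1)))
        = ennreal (W a)"
      unfolding val[of a, symmetric]
      by (rule ennreal_plus[symmetric]) (simp_all add: sum_nonneg chain_nonneg beta_nonneg)
  qed
  also have "\<dots> = (\<Sum>b. ennreal (Kk 0 b * (beta n b / real b ^ k)))" by (rule sumW)
  finally show ?thesis unfolding Lj_def .
qed

theorem theorem2p8:
  fixes k n :: nat
  assumes "k \<ge> 1" and "n \<ge> 1"
  shows "mzv_star ((k + 1) # replicate n 1) =
    (-1) ^ (k - 1) *
      ((\<Sum>j<k - 1. mzv ((n + 1) # replicate j 1 @ [2] @ replicate (k - 2 - j) 1))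
       + real (n + 1) * mzv ((n + 2) # replicate (k - 1) 1))
    + (\<Sum>r<k - 1. (-1) ^ r * mzv [k - r] * mzv ((n + 1) # replicate r 1))"
proof -
  have k: "k \<ge> 1" and n: "n \<ge> 1" using assms by auto
  obtain m where km: "k = Suc m" using k by (cases k) auto
  define X where "X c b = beta n b * (1 / (real c ^ k * real (b + c)))" for c b :: nat
  define Y where "Y c b = (beta n b / real b ^ k) * (real b / (real c * real (c + b)))" for c b :: nat
  define x where "x r c b = 1 / real c ^ (k - r) * (beta n b / real b ^ Suc r)" for r c b :: nat
  define Ev where "Ev = {..<k - 1} \<inter> {r. even r}"
  define Od where "Od = {..<k - 1} \<inter> - {r. even r}"
  define y where "y r = mzv [k - r] * mzv ((n + 1) # replicate r 1)" for r
  define Bsum where "Bsum = (\<Sum>j<k - 1. mzv ((n + 1) # replicate j 1 @ [2] @ replicate (k - 2 - j) 1))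
       + real (n + 1) * mzv ((n + 2) # replicate (k - 1) 1)"
  define L where "L = mzv_star ((k + 1) # replicate n 1)"
  define P2 where "P2 = (\<Sum>b. ennreal (Kk 0 b * (beta n b / real b ^ k)))"
  define P1 where "P1 = (\<Sum>c. ennreal (hstar n c / real c ^ (k + 1)))"
  have Xnn: "X c b \<ge> 0" for c b by (simp add: X_def beta_nonneg)
  have Ynn: "Y c b \<ge> 0" for c b by (simp add: Y_def beta_nonneg)
  have xnn: "x r c b \<ge> 0" for r c b by (simp add: x_def beta_nonneg)
  have ynn: "y r \<ge> 0" for r by (simp add: y_def mzv_nonneg)
  have Bnn: "Bsum \<ge> 0" by (simp add: Bsum_def mzv_nonneg sum_nonneg)
  have Lnn: "L \<ge> 0" by (simp add: L_def mzv_star_nonneg)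
  have hB: "ennreal Bsum = P2" unfolding Bsum_def P2_def by (rule Bpart[OF k n])
  have P2f: "P2 \<noteq> top" unfolding P2_def by (rule P2fin[OF n k])
  have hy: "ennreal (y r) = (\<Sum>c. \<Sum>b. ennreal (x r c b))" if "r < k - 1" for r
  proof -
    have kr: "k - r \<ge> 2" using that by simp
    have "ennreal (y r) = ennreal (mzv [k - r]) * ennreal (mzv ((n + 1) # replicate r 1))"
      unfolding y_def by (rule ennreal_mult) (simp_all add: mzv_nonneg)
    also have "ennreal (mzv [k - r]) = (\<Sum>c. ennreal (1 / real c ^ (k - r)))" by (rule M2[OF kr])
    also have "ennreal (mzv ((n + 1) # replicate r 1)) = (\<Sum>a. ennreal (beta (Suc r) a / real a ^ (n + 1 - 1)))"
      by (rule M1) (use n in simp)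
    also have "(\<Sum>a. ennreal (beta (Suc r) a / real a ^ (n + 1 - 1))) = (\<Sum>b. ennreal (beta n b / real b ^ Suc r))"
      using D1[OF n, of r] by simp
    also have "(\<Sum>c. ennreal (1 / real c ^ (k - r))) * (\<Sum>b. ennreal (beta n b / real b ^ Suc r))
        = (\<Sum>c. ennreal (1 / real c ^ (k - r)) * (\<Sum>b. ennreal (beta n b / real b ^ Suc r)))"
      by (rule ennreal_suminf_multc[symmetric])
    also have "\<dots> = (\<Sum>c. \<Sum>b. ennreal (1 / real c ^ (k - r)) * ennreal (beta n b / real b ^ Suc r))"
      by (intro suminf_cong) (rule ennreal_suminf_cmult[symmetric])
    also have "\<dots> = (\<Sum>c. \<Sum>b. ennreal (x r c b))"
      unfolding x_def by (intro suminf_cong ennreal_mult[symmetric]) (simp_all add: beta_nonneg)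
    finally show ?thesis .
  qed
  have hX: "P1 = (\<Sum>c. \<Sum>b. ennreal (X c b))"
  proof -
    have "ennreal (hstar n c / real c ^ (k + 1)) = (\<Sum>b. ennreal (X c b))" for c
    proof (cases "c = 0")
      case True then show ?thesis by (simp add: X_def km)
    next
      case False
      then have c1: "c \<ge> 1" by simp
      have "ennreal (hstar n c / real c ^ (k + 1)) = ennreal (1 / real c ^ (k + 1) * hstar n c)"
        by simp
      also have "\<dots> = ennreal (1 / real c ^ (k + 1)) * ennreal (hstar n c)"
        by (rule ennreal_mult) (simp_all add: hstar_nonneg)
      also have "ennreal (hstar n c) = (\<Sum>b. ennreal (beta n b * (real c / real (b + c))))"
        by (rule D3[OF c1, symmetric])
      also have "ennreal (1 / real c ^ (k + 1)) * (\<Sum>b. ennreal (beta n b * (real c / real (b + c))))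
          = (\<Sum>b. ennreal (1 / real c ^ (k + 1)) * ennreal (beta n b * (real c / real (b + c))))"
        by (rule ennreal_suminf_cmult[symmetric])
      also have "\<dots> = (\<Sum>b. ennreal (X c b))"
      proof (intro suminf_cong)
        fix b
        have cp: "real c > 0" using False by simp
        have bc: "real (b + c) > 0" using False by simp
        have e: "1 / real c ^ (k + 1) * (beta n b * (real c / real (b + c))) = X c b"
          using cp bc by (simp add: X_def field_simps)
        show "ennreal (1 / real c ^ (k + 1)) * ennreal (beta n b * (real c / real (b + c))) = ennreal (X c b)"
          unfolding e[symmetric] by (rule ennreal_mult[symmetric]) (simp_all add: beta_nonneg)
      qed
      finally show ?thesis .
    qed
    then show ?thesis unfolding P1_def by simp
  qed
  have hY: "(\<Sum>c. \<Sum>b. ennreal (Y c b)) = P2"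
  proof -
    have "(\<Sum>c. \<Sum>b. ennreal (Y c b)) = (\<Sum>b. \<Sum>c. ennreal (Y c b))" by (rule ennreal_suminf_swap)
    also have "\<dots> = (\<Sum>b. ennreal (Kk 0 b * (beta n b / real b ^ k)))"
    proof (intro suminf_cong)
      fix b
      show "(\<Sum>c. ennreal (Y c b)) = ennreal (Kk 0 b * (beta n b / real b ^ k))"
      proof (cases "b = 0")
        case True then show ?thesis using n by (simp add: Y_def beta_at0)
      next
        case False
        then have b1: "b \<ge> 1" by simp
        have "(\<Sum>c. ennreal (Y c b)) = (\<Sum>c. ennreal (if 0 < c then (beta n b / real b ^ k) * (real b / (real c * real (c + b))) else 0))"
          by (intro suminf_cong) (simp add: Y_def)
        also have "\<dots> = ennreal ((beta n b / real b ^ k) * Kk 0 b)"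
          by (rule KT[OF b1]) (simp add: beta_nonneg)
        finally show ?thesis by (simp add: mult.commute)
      qed
    qed
    finally show ?thesis unfolding P2_def .
  qed
  have pw: "(\<Sum>r\<in>Ev. x r c b) + (if odd k then Y c b else 0) = (\<Sum>r\<in>Od. x r c b) + (X c b + (if even k then Y c b else 0))" for c b
  proof (cases "c = 0 \<or> b = 0")
    case True
    have x0: "x r c b = 0" if "r < k - 1" for r
    proof -
      have "k - r \<noteq> 0" using that by simp
      then show ?thesis using True n by (auto simp: x_def beta_at0)
    qed
    have "X c b = 0" "Y c b = 0" using True n km by (auto simp: X_def Y_def beta_at0)
    moreover have "(\<Sum>r\<in>Ev. x r c b) = 0" "(\<Sum>r\<in>Od. x r c b) = 0"
      by (auto intro!: sum.neutral x0 simp: Ev_def Od_def)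
    ultimately show ?thesis by simp
  next
    case False
    then have b1: "b \<ge> 1" and c1: "c \<ge> 1" by auto
    have alt: "(\<Sum>r<m. (-1)^r * x r c b) = X c b + (-1)^(Suc m) * Y c b"
      unfolding x_def X_def Y_def km using altsum[OF b1 c1, of m "beta n b"] by simp
    have split: "(\<Sum>r<m. (-1)^r * x r c b) = (\<Sum>r\<in>Ev. x r c b) - (\<Sum>r\<in>Od. x r c b)"
      unfolding Ev_def Od_def km by (simp add: sum_alt_split)
    show ?thesis
    proof (cases "even m")
      case True
      then have "odd k" "\<not> even k" using km by auto
      then show ?thesis using alt split True by simp
    next
      case False
      then have "\<not> odd k" "even k" using km by auto
      then show ?thesis using alt split False by simp
    qed
  qed
  have fE: "finite Ev" "finite Od" by (simp_all add: Ev_def Od_def)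
  have eq_enn: "(\<Sum>r\<in>Ev. ennreal (y r)) + (if odd k then P2 else 0) = (\<Sum>r\<in>Od. ennreal (y r)) + (P1 + (if even k then P2 else 0))"
  proof -
    have LHS: "(\<Sum>c. \<Sum>b. ennreal ((\<Sum>r\<in>Ev. x r c b) + (if odd k then Y c b else 0))) = (\<Sum>r\<in>Ev. ennreal (y r)) + (if odd k then P2 else 0)"
    proof -
      have "(\<Sum>c. \<Sum>b. ennreal ((\<Sum>r\<in>Ev. x r c b) + (if odd k then Y c b else 0)))
          = (\<Sum>r\<in>Ev. \<Sum>c. \<Sum>b. ennreal (x r c b)) + (\<Sum>c. \<Sum>b. ennreal (if odd k then Y c b else 0))"
        by (rule ennreal_dsum_lin) (simp_all add: fE xnn Ynn)
      also have "(\<Sum>r\<in>Ev. \<Sum>c. \<Sum>b. ennreal (x r c b)) = (\<Sum>r\<in>Ev. ennreal (y r))"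
        by (rule sum.cong[OF refl]) (rule hy[symmetric], simp add: Ev_def)
      also have "(\<Sum>c. \<Sum>b. ennreal (if odd k then Y c b else 0)) = (if odd k then P2 else 0)"
        using hY by (cases "odd k") simp_all
      finally show ?thesis .
    qed
    have RHS: "(\<Sum>c. \<Sum>b. ennreal ((\<Sum>r\<in>Od. x r c b) + (X c b + (if even k then Y c b else 0))))
        = (\<Sum>r\<in>Od. ennreal (y r)) + (P1 + (if even k then P2 else 0))"
    proof -
      have "(\<Sum>c. \<Sum>b. ennreal ((\<Sum>r\<in>Od. x r c b) + (X c b + (if even k then Y c b else 0))))
          = (\<Sum>r\<in>Od. \<Sum>c. \<Sum>b. ennreal (x r c b)) + (\<Sum>c. \<Sum>b. ennreal (X c b + (if even k then Y c b else 0)))"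
        by (rule ennreal_dsum_lin) (simp_all add: fE xnn Ynn Xnn)
      also have "(\<Sum>r\<in>Od. \<Sum>c. \<Sum>b. ennreal (x r c b)) = (\<Sum>r\<in>Od. ennreal (y r))"
        by (rule sum.cong[OF refl]) (rule hy[symmetric], simp add: Od_def)
      also have "(\<Sum>c. \<Sum>b. ennreal (X c b + (if even k then Y c b else 0)))
          = (\<Sum>c. \<Sum>b. ennreal (X c b)) + (\<Sum>c. \<Sum>b. ennreal (if even k then Y c b else 0))"
        by (rule ennreal_dsum_add) (simp_all add: Xnn Ynn)
      also have "(\<Sum>c. \<Sum>b. ennreal (if even k then Y c b else 0)) = (if even k then P2 else 0)"
        using hY by (cases "even k") simp_all
      finally show ?thesis unfolding hX .
    qed
    show ?thesis unfolding LHS[symmetric] RHS[symmetric] pw ..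
  qed
  have P1fin: "P1 \<noteq> top"
  proof -
    have "P1 \<le> (\<Sum>r\<in>Od. ennreal (y r)) + (P1 + (if even k then P2 else 0))"
      by (rule add_increasing[OF zero_le]) (rule add_increasing2[OF zero_le order_refl])
    also have "\<dots> = (\<Sum>r\<in>Ev. ennreal (y r)) + (if odd k then P2 else 0)" by (rule eq_enn[symmetric])
    also have "\<dots> < top"
    proof -
      have "(\<Sum>r\<in>Ev. ennreal (y r)) < top" by (simp add: ynn sum_nonneg)
      moreover have "(if odd k then P2 else 0) < top" using P2f by (simp add: less_top[symmetric])
      ultimately show ?thesis by simp
    qed
    finally show ?thesis by simp
  qed
  have hL: "ennreal L = P1"
  proof -
    have fin: "(\<Sum>a. ennreal (chainS (replicate n 1) a / real a ^ (k + 1))) \<noteq> top"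
      unfolding chainS_rep using P1fin unfolding P1_def .
    have "ennreal L = (\<Sum>a. ennreal (chainS (replicate n 1) a / real a ^ (k + 1)))"
      unfolding L_def by (rule mzv_star_cons[OF _ fin]) simp
    then show ?thesis unfolding chainS_rep P1_def .
  qed
  have real_eq: "(\<Sum>r\<in>Ev. y r) + (if odd k then Bsum else 0) = (\<Sum>r\<in>Od. y r) + (L + (if even k then Bsum else 0))"
  proof -
    have l: "ennreal ((\<Sum>r\<in>Ev. y r) + (if odd k then Bsum else 0)) = (\<Sum>r\<in>Ev. ennreal (y r)) + (if odd k then P2 else 0)"
      by (cases "odd k") (simp_all add: ynn sum_nonneg Bnn hB[symmetric])
    have r: "ennreal ((\<Sum>r\<in>Od. y r) + (L + (if even k then Bsum else 0))) = (\<Sum>r\<in>Od. ennreal (y r)) + (P1 + (if even k then P2 else 0))"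
      by (cases "even k") (simp_all add: ynn sum_nonneg Bnn Lnn hB[symmetric] hL[symmetric])
    have "ennreal ((\<Sum>r\<in>Ev. y r) + (if odd k then Bsum else 0)) = ennreal ((\<Sum>r\<in>Od. y r) + (L + (if even k then Bsum else 0)))"
      unfolding l r by (rule eq_enn)
    moreover have A0: "0 \<le> (\<Sum>r\<in>Ev. y r) + (if odd k then Bsum else 0)"
      by (simp add: ynn sum_nonneg Bnn)
    moreover have B0: "0 \<le> (\<Sum>r\<in>Od. y r) + (L + (if even k then Bsum else 0))"
      by (simp add: ynn sum_nonneg Bnn Lnn)
    ultimately show ?thesis using ennreal_inj by blast
  qed
  have alt: "(\<Sum>r<k - 1. (-1) ^ r * mzv [k - r] * mzv ((n + 1) # replicate r 1)) = (\<Sum>r\<in>Ev. y r) - (\<Sum>r\<in>Od. y r)"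
  proof -
    have "(\<Sum>r<k - 1. (-1) ^ r * mzv [k - r] * mzv ((n + 1) # replicate r 1)) = (\<Sum>r<k - 1. (-1) ^ r * y r)"
      by (simp add: y_def mult.assoc)
    also have "\<dots> = (\<Sum>r\<in>Ev. y r) - (\<Sum>r\<in>Od. y r)"
      unfolding Ev_def Od_def by (rule sum_alt_split)
    finally show ?thesis .
  qed
  show ?thesis
    unfolding L_def[symmetric] Bsum_def[symmetric] alt
  proof (cases "even m")
    case True
    then have "odd k" using km by simp
    then show "L = (-1) ^ (k - 1) * Bsum + ((\<Sum>r\<in>Ev. y r) - (\<Sum>r\<in>Od. y r))"
      using real_eq True km by simp
  next
    case False
    then have "even k" using km by simp
    then show "L = (-1) ^ (k - 1) * Bsum + ((\<Sum>r\<in>Ev. y r) - (\<Sum>r\<in>Od. y r))"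
      using real_eq False km by simp
  qed
qed

end
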